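(* Let $\Lambda$ be a commutative $\mathbb Q$-algebra with an element $\ell$ such that $\ell$ and $\ell^k-1$ are invertible for all $k\ge1$, let $K(\mathcal A)$ and $C(\mathcal A)$ be as in the context, and let $\chi:K(\mathcal A)\times K(\mathcal A)\to\mathbb Z$ be biadditive. For finite sets $I,J,K$ and maps $\kappa:I\to C(\mathcal A)$, $\lambda:J\to C(\mathcal A)$, $\mu:K\to C(\mathcal A)$, the following two elements of $\Lambda$ are equal: $$\frac{(\ell-1)^{|K|-|I|-|J|}}{|\mathrm{Aut}(K,\mu)|}\sum_{n\ge0}\frac{(-1)^{n-|K|}}{n!}\!\!\!\sum_{\substack{\phi:I\to L,\ \psi:J\to L,\ \theta:L\to K:\\ \phi\amalg\psi\text{ surjective},\\ \mu(k)=\kappa((\theta\circ\phi)^{-1}(k))+\lambda((\theta\circ\psi)^{-1}(k))\ \forall k\in K}}\ \prod_{k\in K}(|\theta^{-1}(k)|-1)!\prod_{\substack{i\in I,\,j\in J:\\ \phi(i)=\psi(j)}}\ell^{-\chi(\lambda(j),\kappa(i))},$$ where $L=\{1,\dots,n\}$, and $$\frac{1}{|\mathrm{Aut}(K,\mu)|}\sum_{\substack{\eta:I\to K,\ \zeta:J\to K:\\ \mu(k)=\kappa(\eta^{-1}(k))+\lambda(\zeta^{-1}(k))\ \forall k}}\ \sum_{\Gamma}(\ell-1)^{b_1(\Gamma)}\prod_{\text{edges }i\to j\text{ of }\Gamma}\frac{\ell^{-\chi(\lambda(j),\kappa(i))}-1}{\ell-1},$$ where $\Gamma$ runs over directed graphs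 with vertex set $I\amalg J$, all of whose edges are of the form $i\to j$ with $i\in I$, $j\in J$, with at most one edge between any two vertices, and whose connected components are exactly the sets $\eta^{-1}(k)\amalg\zeta^{-1}(k)$ for $k\in K$; $b_1(\Gamma)$ is the first Betti number of $\Gamma$. Consequently the multiplication on $B(\mathcal A,\Lambda,\chi)$ defined by $b_{[I,\kappa]}\star b_{[J,\lambda]}=\sum_{[K,\mu]}(\text{first expression})\,b_{[K,\mu]}$ coincides with the one given by $b_{[I,\kappa]}\star b_{[J,\lambda]}=\sum_{[K,\mu]}(\text{second expression})\,b_{[K,\mu]}$.
   Context: $\mathcal A$ is an abelian category and $K(\mathcal A)$ a quotient of $K_0(\mathcal A)$ such that $[X]=0$ in $K(\mathcal A)$ implies $X\cong0$; $C(\mathcal A)=\{[X]:X\in\mathcal A,\ X\not\cong0\}\subseteq K(\mathcal A)$. For a subset $S$ of a domain of $\kappa$, $\kappa(S)=\sum_{s\in S}\kappa(s)$ (so $\kappa(\emptyset)=0$). $\mathrm{Aut}(K,\mu)$ is the group of bijections $\iota:K\to K$ with $\mu\circ\iota=\mu$. Pairs $(I,\kappa)$, $\kappa:I\to C(\mathcal A)$ with $I$ finite, are equivalent if related by a bijection of index sets compatible with the maps; $[I,\kappa]$ denotes the class, and $B(\mathcal A,\Lambda,\chi)$ is the free $\Lambda$-module with basis symbols $b_{[I,\kappa]}$, the product being extended $\Lambda$-bilinearly (the coefficients above depend only on the classes). *)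

theory Defs
  imports Main "HOL-Library.FuncSet"
begin

text \<open>Multiplicative inverse in a commutative ring (meaningful for units).\<close>
definition rinv :: "'a::comm_ring_1 \<Rightarrow> 'a" where
  "rinv x = (SOME y. x * y = 1)"

definition ipow :: "'a::comm_ring_1 \<Rightarrow> int \<Rightarrow> 'a" where
  "ipow x z = (if 0 \<le> z then x ^ nat z else rinv x ^ nat (- z))"

definition fsum :: "(nat \<Rightarrow> 'a::comm_monoid_add) \<Rightarrow> 'a" where
  "fsum f = sum f {n. f n \<noteq> 0}"

definition aut_card :: "'c set \<Rightarrow> ('c \<Rightarrow> 'g) \<Rightarrow> nat" where
  "aut_card K mu = card {\<iota> \<in> K \<rightarrow>\<^sub>E K. bij_betw \<iota> K K \<and> (\<forall>k\<in>K. mu (\<iota> k) = mu k)}"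

text \<open>Underlying undirected adjacency of a directed graph on vertex set I \<amalg> J whose edges
  i \<rightarrow> j (i \<in> I, j \<in> J) are given by E \<subseteq> I \<times> J.\<close>
definition bip_adj :: "('i \<times> 'j) set \<Rightarrow> ('i + 'j) \<Rightarrow> ('i + 'j) \<Rightarrow> bool" where
  "bip_adj E u v \<longleftrightarrow> (\<exists>i j. (i, j) \<in> E \<and> ((u = Inl i \<and> v = Inr j) \<or> (u = Inr j \<and> v = Inl i)))"

definition graph_components :: "'i set \<Rightarrow> 'j set \<Rightarrow> ('i \<times> 'j) set \<Rightarrow> ('i + 'j) set set" where
  "graph_components I J E =
     (\<lambda>v. {w \<in> I <+> J. (bip_adj E)\<^sup>*\<^sup>* v w}) ` (I <+> J)"

definition betti1 :: "'i set \<Rightarrow> 'j set \<Rightarrow> ('i \<times> 'j) set \<Rightarrow> int" where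
  "betti1 I J E = int (card E) - int (card I + card J) + int (card (graph_components I J E))"

end

theory Submission
  imports Defs
begin

lemma rinv_unit: fixes u :: "'a::comm_ring_1" assumes "u dvd 1" shows "u * rinv u = 1"
proof -
  from assms obtain v where "1 = u * v" by (auto elim: dvdE)
  then have "\<exists>y. u * y = 1" by metis
  then show ?thesis unfolding rinv_def by (rule someI_ex)
qed

lemma rinv_unit': fixes u :: "'a::comm_ring_1" assumes "u dvd 1" shows "rinv u * u = 1"
  using rinv_unit[OF assms] by (simp add: mult.commute)

lemma rinv_eq: fixes u v :: "'a::comm_ring_1" assumes "u * v = 1" shows "rinv u = v"
proof -
  have "u dvd 1" using assms by (metis dvdI)
  then have "u * rinv u = 1" by (rule rinv_unit)
  then have "v * (u * rinv u) = v" by simp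
  then show ?thesis using assms by (simp add: mult.assoc[symmetric] mult.commute)
qed

lemma rinv_mult: fixes u v :: "'a::comm_ring_1" assumes "u dvd 1" "v dvd 1"
  shows "rinv (u * v) = rinv u * rinv v"
  apply (rule rinv_eq)
  using rinv_unit[OF assms(1)] rinv_unit[OF assms(2)] by (simp add: algebra_simps)

lemma rinv_one[simp]: "rinv (1::'a::comm_ring_1) = 1" by (rule rinv_eq) simp

lemma rinv_unit_dvd: fixes u :: "'a::comm_ring_1" assumes "u dvd 1" shows "rinv u dvd 1"
  using rinv_unit'[OF assms] by (metis dvdI)

lemma ipow_minus1: fixes u :: "'a::comm_ring_1" assumes "u dvd 1"
  shows "ipow u (z - 1) = ipow u z * rinv u"
proof (cases "z \<ge> 1")
  case True
  then have "nat z = Suc (nat (z - 1))" by simp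
  then have "u ^ nat z * rinv u = u ^ nat (z - 1) * (u * rinv u)" by (simp add: algebra_simps)
  then show ?thesis using True rinv_unit[OF assms] unfolding ipow_def
    by simp
next
  case False
  then have "nat (-(z - 1)) = Suc (nat (-z))" by simp
  then show ?thesis using False unfolding ipow_def by (simp add: mult.commute)
qed

lemma ipow_minus_nat: fixes u :: "'a::comm_ring_1" assumes "u dvd 1"
  shows "ipow u (z - int e) = ipow u z * rinv u ^ e"
proof (induction e)
  case 0 then show ?case by simp
next
  case (Suc e)
  have "ipow u (z - int (Suc e)) = ipow u ((z - int e) - 1)" by (simp add: algebra_simps)
  also have "\<dots> = ipow u (z - int e) * rinv u" by (rule ipow_minus1[OF assms])
  finally show ?case using Suc by (simp add: algebra_simps)
qed

lemma ipow_neg1: "ipow (-1::'a::comm_ring_1) (int n - int k) = (-1) ^ (n + k)"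
proof -
  have r: "rinv (-1::'a) = -1" by (rule rinv_eq) simp
  show ?thesis
  proof (cases "k \<le> n")
    case True
    then have e: "n + k = nat (int n - int k) + 2 * k" by simp
    have "(-1::'a) ^ (n + k) = (-1) ^ nat (int n - int k)" unfolding e by (simp add: power_add power_mult)
    then show ?thesis using True unfolding ipow_def by simp
  next
    case False
    then have e: "n + k = nat (- (int n - int k)) + 2 * n" by simp
    have "(-1::'a) ^ (n + k) = (-1) ^ nat (- (int n - int k))" unfolding e by (simp add: power_add power_mult)
    then show ?thesis using False r unfolding ipow_def by simp
  qed
qed

definition ifc :: "nat \<Rightarrow> 'a::comm_ring_1" where "ifc n = rinv (of_nat (fact n))"

definition SF :: "'k set \<Rightarrow> 'l set \<Rightarrow> ('k \<Rightarrow> nat \<Rightarrow> 'a::comm_ring_1) \<Rightarrow> 'a" where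
  "SF K L a = (\<Sum>\<theta>\<in>L \<rightarrow>\<^sub>E K. \<Prod>k\<in>K. a k (card {x\<in>L. \<theta> x = k}))"

definition cK :: "'k set \<Rightarrow> ('k \<Rightarrow> nat \<Rightarrow> 'a::comm_ring_1) \<Rightarrow> nat \<Rightarrow> 'a" where
  "cK K a n = SF K {1..n} a"

lemma SF_empty: "finite L \<Longrightarrow> SF {} L a = of_nat (0 ^ card L)"
  unfolding SF_def by (simp add: card_PiE)

lemma SF_split:
  fixes a :: "'k \<Rightarrow> nat \<Rightarrow> 'a::comm_ring_1"
  assumes L: "finite L" and K: "finite K" and k: "k \<notin> K"
  shows "SF (insert k K) L a = (\<Sum>A\<in>Pow L. a k (card A) * SF K (L - A) a)"
proof -
  have "(\<Sum>A\<in>Pow L. a k (card A) * SF K (L - A) a)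
      = (\<Sum>A\<in>Pow L. \<Sum>\<theta>\<in>(L - A) \<rightarrow>\<^sub>E K. a k (card A) * (\<Prod>k'\<in>K. a k' (card {x\<in>L - A. \<theta> x = k'})))"
    unfolding SF_def by (simp add: sum_distrib_left)
  also have "\<dots> = (\<Sum>(A,\<theta>)\<in>Sigma (Pow L) (\<lambda>A. (L - A) \<rightarrow>\<^sub>E K). a k (card A) * (\<Prod>k'\<in>K. a k' (card {x\<in>L - A. \<theta> x = k'})))"
    using L K by (subst sum.Sigma) (auto intro: finite_PiE)
  also have "\<dots> = SF (insert k K) L a"
    unfolding SF_def
  proof (rule sum.reindex_bij_witness[where i = "\<lambda>\<theta>. ({x\<in>L. \<theta> x = k}, restrict \<theta> (L - {x\<in>L. \<theta> x = k}))"
        and j = "\<lambda>(A, \<theta>'). (\<lambda>x. if x \<in> A then k else \<theta>' x)"])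
    fix \<theta> assume th: "\<theta> \<in> L \<rightarrow>\<^sub>E insert k K"
    show "(case ({x\<in>L. \<theta> x = k}, restrict \<theta> (L - {x\<in>L. \<theta> x = k})) of (A, \<theta>') \<Rightarrow> (\<lambda>x. if x \<in> A then k else \<theta>' x)) = \<theta>"
      using th by (auto simp: fun_eq_iff PiE_def extensional_def)
    show "({x\<in>L. \<theta> x = k}, restrict \<theta> (L - {x\<in>L. \<theta> x = k})) \<in> Sigma (Pow L) (\<lambda>A. (L - A) \<rightarrow>\<^sub>E K)"
      using th by auto
  next
    fix p assume p: "p \<in> Sigma (Pow L) (\<lambda>A. (L - A) \<rightarrow>\<^sub>E K)"
    obtain A \<theta>' where pe: "p = (A, \<theta>')" by force
    have A: "A \<subseteq> L" and th: "\<theta>' \<in> (L - A) \<rightarrow>\<^sub>E K" using p pe by auto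
    have e1: "{x \<in> L. (if x \<in> A then k else \<theta>' x) = k} = A"
      using A th k by (auto simp: PiE_def Pi_def) 
    moreover have "restrict (\<lambda>x. if x \<in> A then k else \<theta>' x) (L - A) = \<theta>'"
      using th by (auto simp: fun_eq_iff PiE_def extensional_def)
    ultimately show "({x \<in> L. (case p of (A, \<theta>') \<Rightarrow> \<lambda>x. if x \<in> A then k else \<theta>' x) x = k},
          restrict ((case p of (A, \<theta>') \<Rightarrow> \<lambda>x. if x \<in> A then k else \<theta>' x))
           (L - {x \<in> L. (case p of (A, \<theta>') \<Rightarrow> \<lambda>x. if x \<in> A then k else \<theta>' x) x = k})) = p"
      using pe by simp
    show "(case p of (A, \<theta>') \<Rightarrow> \<lambda>x. if x \<in> A then k else \<theta>' x) \<in> L \<rightarrow>\<^sub>E insert k K"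
      using A th pe by (auto simp: PiE_def Pi_def extensional_def)
    have "{x\<in>L. (if x \<in> A then k else \<theta>' x) = k'} = {x \<in> L - A. \<theta>' x = k'}" if "k' \<in> K" for k'
      using that k by auto
    then have "(\<Prod>ka\<in>K. a ka (card {x \<in> L. (if x \<in> A then k else \<theta>' x) = ka}))
       = (\<Prod>k'\<in>K. a k' (card {x \<in> L - A. \<theta>' x = k'}))"
      by (intro prod.cong) auto
    then show "(\<Prod>ka\<in>insert k K. a ka (card {x \<in> L. (case p of (A, \<theta>') \<Rightarrow> \<lambda>x. if x \<in> A then k else \<theta>' x) x = ka})) =
         (case p of (A, \<theta>) \<Rightarrow> a k (card A) * (\<Prod>k'\<in>K. a k' (card {x \<in> L - A. \<theta> x = k'})))"
      using K k pe e1 by (simp add: prod.insert)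
  qed
  finally show ?thesis by simp
qed

lemma pow_sum_card:
  fixes f :: "nat \<Rightarrow> 'a::comm_ring_1"
  assumes L: "finite L"
  shows "(\<Sum>A\<in>Pow L. f (card A)) = (\<Sum>j\<le>card L. of_nat (card L choose j) * f j)"
proof -
  have "(\<Sum>A\<in>Pow L. f (card A)) = (\<Sum>j\<le>card L. \<Sum>A\<in>{A\<in>Pow L. card A = j}. f (card A))"
    using L by (intro sum.group[symmetric]) (auto intro: card_mono)
  also have "\<dots> = (\<Sum>j\<le>card L. of_nat (card L choose j) * f j)"
  proof (rule sum.cong[OF refl])
    fix j
    have "{A\<in>Pow L. card A = j} = {A. A \<subseteq> L \<and> card A = j}" by auto
    then have "card {A\<in>Pow L. card A = j} = card L choose j" using n_subsets[OF L] by simp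
    then show "(\<Sum>A\<in>{A\<in>Pow L. card A = j}. f (card A)) = of_nat (card L choose j) * f j"
      by simp
  qed
  finally show ?thesis .
qed

lemma SF_insert_card:
  fixes a :: "'k \<Rightarrow> nat \<Rightarrow> 'a::comm_ring_1"
  assumes K: "finite K" and k: "k \<notin> K"
    and IH: "\<And>L::'l set. finite L \<Longrightarrow> SF K L a = cK K a (card L)"
    and L: "finite (L::'l set)"
  shows "SF (insert k K) L a = (\<Sum>j\<le>card L. of_nat (card L choose j) * (a k j * cK K a (card L - j)))"
proof -
  have "SF (insert k K) L a = (\<Sum>A\<in>Pow L. a k (card A) * SF K (L - A) a)" by (rule SF_split[OF L K k])
  also have "\<dots> = (\<Sum>A\<in>Pow L. a k (card A) * cK K a (card L - card A))"
    using L by (intro sum.cong refl) (auto simp: IH card_Diff_subset finite_subset)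
  also have "\<dots> = (\<Sum>j\<le>card L. of_nat (card L choose j) * (a k j * cK K a (card L - j)))"
    by (rule pow_sum_card[OF L, where f = "\<lambda>j. a k j * cK K a (card L - j)"])
  finally show ?thesis .
qed

lemma SF_card_nat:
  fixes a :: "'k \<Rightarrow> nat \<Rightarrow> 'a::comm_ring_1"
  assumes K: "finite K"
  shows "finite (L::nat set) \<Longrightarrow> SF K L a = cK K a (card L)"
  using K
proof (induction K arbitrary: L rule: finite_induct)
  case empty
  then show ?case unfolding cK_def by (simp add: SF_empty)
next
  case (insert k K)
  have "SF (insert k K) L a = (\<Sum>j\<le>card L. of_nat (card L choose j) * (a k j * cK K a (card L - j)))"
    by (rule SF_insert_card[OF insert(1,2) insert(3) insert(4)])
  also have "\<dots> = SF (insert k K) {1..card L} a"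
    using SF_insert_card[OF insert(1,2) insert(3), of "{1..card L}"] by simp
  finally show ?case unfolding cK_def .
qed

lemma SF_card:
  fixes a :: "'k \<Rightarrow> nat \<Rightarrow> 'a::comm_ring_1"
  assumes K: "finite K"
  shows "finite (L::'l set) \<Longrightarrow> SF K L a = cK K a (card L)"
  using K
proof (induction K arbitrary: L rule: finite_induct)
  case empty
  then show ?case unfolding cK_def by (simp add: SF_empty)
next
  case (insert k K)
  have "SF (insert k K) L a = (\<Sum>j\<le>card L. of_nat (card L choose j) * (a k j * cK K a (card L - j)))"
    by (rule SF_insert_card[OF insert(1,2) insert(3) insert(4)])
  also have "\<dots> = SF (insert k K) {1..card L} a"
    using SF_insert_card[OF insert(1,2), where L="{1..card L}" and a=a] by (simp add: SF_card_nat insert(1))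
  finally show ?case unfolding cK_def .
qed

lemma unit_of_nat: assumes Q: "\<And>n::nat. n \<ge> 1 \<Longrightarrow> of_nat n dvd (1::'a::comm_ring_1)"
  and "m \<ge> 1" shows "of_nat m dvd (1::'a)" using assms by blast

lemma ifc_binom:
  fixes dummy :: "'a::comm_ring_1"
  assumes Q: "\<And>n::nat. n \<ge> 1 \<Longrightarrow> of_nat n dvd (1::'a)" and jn: "j \<le> n"
  shows "(ifc n :: 'a) * of_nat (n choose j) = ifc j * ifc (n - j)"
proof -
  have u1: "of_nat (fact j) dvd (1::'a)" by (rule Q) (simp add: Suc_leI)
  have u2: "of_nat (fact (n - j)) dvd (1::'a)" by (rule Q) (simp add: Suc_leI)
  have u3: "of_nat (n choose j) dvd (1::'a)" by (rule Q) (simp add: jn Suc_leI)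
  have fe: "(of_nat (fact n) :: 'a) = of_nat (fact j) * of_nat (fact (n - j)) * of_nat (n choose j)"
    using binomial_fact_lemma[OF jn] by (metis of_nat_mult)
  then have "(ifc n :: 'a) = rinv (of_nat (fact j)) * rinv (of_nat (fact (n - j))) * rinv (of_nat (n choose j))"
  proof -
    have u12: "of_nat (fact j) * of_nat (fact (n - j)) dvd (1::'a)" using mult_dvd_mono[OF u1 u2] by simp
    show ?thesis unfolding ifc_def using u1 u2 u3 fe by (simp add: rinv_mult[OF u12 u3] rinv_mult[OF u1 u2])
  qed
  then show ?thesis unfolding ifc_def using rinv_unit'[OF u3] by (simp add: mult.assoc)
qed

lemma triangle_sum:
  fixes f :: "nat \<Rightarrow> nat \<Rightarrow> 'a::comm_monoid_add"
  shows "(\<Sum>n\<le>N. \<Sum>j\<le>n. f j (n - j)) = (\<Sum>j\<le>N. \<Sum>m\<le>N - j. f j m)"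
proof -
  have "(\<Sum>n\<le>N. \<Sum>j\<le>n. f j (n - j)) = (\<Sum>(i,j)\<in>{(i,j). i+j \<le> N}. f i j)"
    by (rule sum.triangle_reindex_eq[symmetric])
  also have "{(i,j). i+j \<le> N} = Sigma {..N} (\<lambda>i. {..N - i})" by auto
  also have "(\<Sum>(i,j)\<in>Sigma {..N} (\<lambda>i. {..N - i}). f i j) = (\<Sum>j\<le>N. \<Sum>m\<le>N - j. f j m)"
    by (subst sum.Sigma) auto
  finally show ?thesis .
qed

lemma sum_atMost_vanish:
  fixes f :: "nat \<Rightarrow> 'a::comm_monoid_add"
  assumes "\<And>n. n > M \<Longrightarrow> f n = 0" "M \<le> N"
  shows "(\<Sum>n\<le>N. f n) = (\<Sum>n\<le>M. f n)"
  using assms by (intro sum.mono_neutral_right) auto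

lemma cK_empty: "cK {} a n = (if n = 0 then 1 else 0)"
  unfolding cK_def by (simp add: SF_empty power_0_left)

lemma cK_insert:
  assumes K: "finite K" and k: "k \<notin> K"
  shows "cK (insert k K) a n = (\<Sum>j\<le>n. of_nat (n choose j) * (a k j * cK K a (n - j)))"
  using SF_insert_card[OF K k, where L="{1..n}" and a=a] K
  by (simp add: SF_card cK_def[symmetric])

lemma cK_vanish:
  assumes K: "finite K" and a: "\<And>k m. k \<in> K \<Longrightarrow> m > M \<Longrightarrow> a k m = 0"
  shows "n > card K * M \<Longrightarrow> cK K a n = 0"
  using K a
proof (induction K arbitrary: n rule: finite_induct)
  case empty then show ?case by (simp add: cK_empty)
next
  case (insert k K)
  have "of_nat (n choose j) * (a k j * cK K a (n - j)) = 0" if "j \<le> n" for j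
  proof (cases "j > M")
    case True then show ?thesis using insert by simp
  next
    case False
    then have "n - j > card K * M" using insert(1,2,4) by simp
    then show ?thesis using insert by simp
  qed
  then show ?case using insert by (simp add: cK_insert)
qed

lemma EXP:
  fixes a :: "'k \<Rightarrow> nat \<Rightarrow> 'a::comm_ring_1"
  assumes Q: "\<And>n::nat. n \<ge> 1 \<Longrightarrow> of_nat n dvd (1::'a)"
    and K: "finite K" and a: "\<And>k m. k \<in> K \<Longrightarrow> m > M \<Longrightarrow> a k m = 0"
  shows "N \<ge> card K * M \<Longrightarrow> (\<Sum>n\<le>N. ifc n * cK K a n) = (\<Prod>k\<in>K. \<Sum>m\<le>M. ifc m * a k m)"
  using K a
proof (induction K arbitrary: N rule: finite_induct)
  case empty
  have "(\<Sum>n\<le>N. ifc n * cK {} a n) = (\<Sum>n\<le>N. if n = 0 then (ifc 0 :: 'a) else 0)"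
    by (intro sum.cong) (auto simp: cK_empty)
  also have "\<dots> = 1" by (simp add: ifc_def)
  finally show ?case by simp
next
  case (insert k K)
  let ?P = "\<Prod>k\<in>K. \<Sum>m\<le>M. ifc m * a k m"
  have "(\<Sum>n\<le>N. ifc n * cK (insert k K) a n)
      = (\<Sum>n\<le>N. \<Sum>j\<le>n. (ifc j * a k j) * (ifc (n - j) * cK K a (n - j)))"
  proof (rule sum.cong[OF refl])
    fix n
    have "ifc n * cK (insert k K) a n = (\<Sum>j\<le>n. (ifc n * of_nat (n choose j)) * (a k j * cK K a (n - j)))"
      using insert(1,2) by (simp add: cK_insert sum_distrib_left mult.assoc)
    also have "\<dots> = (\<Sum>j\<le>n. (ifc j * a k j) * (ifc (n - j) * cK K a (n - j)))"
      by (intro sum.cong refl) (simp add: ifc_binom[OF Q] mult_ac)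
    finally show "ifc n * cK (insert k K) a n = (\<Sum>j\<le>n. (ifc j * a k j) * (ifc (n - j) * cK K a (n - j)))" .
  qed
  also have "\<dots> = (\<Sum>j\<le>N. \<Sum>m\<le>N - j. (ifc j * a k j) * (ifc m * cK K a m))"
    by (rule triangle_sum)
  also have "\<dots> = (\<Sum>j\<le>N. (ifc j * a k j) * ?P)"
  proof (rule sum.cong[OF refl])
    fix j
    show "(\<Sum>m\<le>N - j. (ifc j * a k j) * (ifc m * cK K a m)) = (ifc j * a k j) * ?P"
    proof (cases "j > M")
      case True then show ?thesis using insert by simp
    next
      case False
      then have "N - j \<ge> card K * M" using insert(1,2,4) by simp
      then have "(\<Sum>m\<le>N - j. ifc m * cK K a m) = ?P" using insert by simp
      then show ?thesis by (simp add: sum_distrib_left[symmetric])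
    qed
  qed
  also have "\<dots> = (\<Sum>j\<le>M. ifc j * a k j) * ?P"
    using insert(1,2,4,5) by (subst sum_atMost_vanish[where M=M]) (auto simp: sum_distrib_right)
  finally show ?case using insert(1,2) by simp
qed

fun sj :: "nat \<Rightarrow> nat \<Rightarrow> nat" where
  "sj 0 m = (if m = 0 then 1 else 0)"
| "sj (Suc p) m = m * (sj p m + sj p (m - 1))"

lemma sj_vanish: "m > p \<Longrightarrow> sj p m = 0"
  by (induction p arbitrary: m) auto

lemma prod_if01: "finite K \<Longrightarrow> (\<Prod>k\<in>K. if P k then 1 else 0 :: nat) = (if \<forall>k\<in>K. P k then 1 else 0)"
  by (induction K rule: finite_induct) auto

definition Sg :: "'q set \<Rightarrow> 'l set \<Rightarrow> ('l \<Rightarrow> 'k) \<Rightarrow> ('q \<Rightarrow> 'k) \<Rightarrow> ('q \<Rightarrow> 'l) set" where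
  "Sg Q L \<theta> h = {g\<in>Q \<rightarrow>\<^sub>E L. g ` Q = L \<and> (\<forall>q\<in>Q. \<theta> (g q) = h q)}"

lemma Sg_finite: "finite Q \<Longrightarrow> finite L \<Longrightarrow> finite (Sg Q L \<theta> h)"
  by (rule finite_subset[of _ "Q \<rightarrow>\<^sub>E L"]) (auto simp: Sg_def intro: finite_PiE)

lemma Sg_fiber:
  assumes a: "a \<notin> Q" and b: "b \<in> L" "\<theta> b = h a" and fQ: "finite Q" and fL: "finite L"
  shows "card {g\<in>Sg (insert a Q) L \<theta> h. g a = b} = card (Sg Q L \<theta> h) + card (Sg Q (L - {b}) \<theta> h)"
proof -
  have bij: "bij_betw (\<lambda>g. g(a := undefined)) {g\<in>Sg (insert a Q) L \<theta> h. g a = b} (Sg Q L \<theta> h \<union> Sg Q (L - {b}) \<theta> h)"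
  proof (rule bij_betw_byWitness[where f' = "\<lambda>g. g(a := b)"])
    show "\<forall>g\<in>{g\<in>Sg (insert a Q) L \<theta> h. g a = b}. (g(a := undefined))(a := b) = g"
      by auto
    show "\<forall>g\<in>Sg Q L \<theta> h \<union> Sg Q (L - {b}) \<theta> h. (g(a := b))(a := undefined) = g"
      using a by (auto simp: Sg_def PiE_def extensional_def fun_eq_iff)
    show "(\<lambda>g. g(a := undefined)) ` {g\<in>Sg (insert a Q) L \<theta> h. g a = b} \<subseteq> Sg Q L \<theta> h \<union> Sg Q (L - {b}) \<theta> h"
    proof
      fix g' assume "g' \<in> (\<lambda>g. g(a := undefined)) ` {g\<in>Sg (insert a Q) L \<theta> h. g a = b}"
      then obtain g where g: "g \<in> Sg (insert a Q) L \<theta> h" "g a = b" and g': "g' = g(a := undefined)" by auto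
      have im: "g' ` Q = g ` Q" using a g' by auto
      have gi: "g ` (insert a Q) = L" using g by (simp add: Sg_def)
      have th: "\<forall>q\<in>Q. \<theta> (g' q) = h q" using g g' a by (auto simp: Sg_def)
      have ext: "g' \<in> Q \<rightarrow>\<^sub>E g ` Q" using g g' a by (auto simp: Sg_def PiE_def extensional_def)
      show "g' \<in> Sg Q L \<theta> h \<union> Sg Q (L - {b}) \<theta> h"
      proof (cases "b \<in> g ` Q")
        case True
        then have "g ` Q = L" using gi g(2) by auto
        then show ?thesis using im th ext by (simp add: Sg_def)
      next
        case False
        then have "g ` Q = L - {b}" using gi g(2) by blast
        then show ?thesis using im th ext by (simp add: Sg_def)
      qed
    qed
    show "(\<lambda>g. g(a := b)) ` (Sg Q L \<theta> h \<union> Sg Q (L - {b}) \<theta> h) \<subseteq> {g\<in>Sg (insert a Q) L \<theta> h. g a = b}"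
    proof
      fix g' assume "g' \<in> (\<lambda>g. g(a := b)) ` (Sg Q L \<theta> h \<union> Sg Q (L - {b}) \<theta> h)"
      then obtain g where g: "g \<in> Sg Q L \<theta> h \<union> Sg Q (L - {b}) \<theta> h" and g': "g' = g(a := b)" by auto
      have "g ` Q = L \<or> g ` Q = L - {b}" using g by (auto simp: Sg_def)
      then have e1: "insert b (g ` Q) = L" using b by auto
      have e2: "g' ` (insert a Q) = insert b (g ` Q)" using a g' by auto
      have e3: "g' \<in> insert a Q \<rightarrow>\<^sub>E L" using g g' a b by (auto simp: Sg_def PiE_def extensional_def Pi_def)
      have e4: "\<forall>q\<in>insert a Q. \<theta> (g' q) = h q" using g g' a b by (auto simp: Sg_def)
      have e5: "g' a = b" using g' by simp
      show "g' \<in> {g\<in>Sg (insert a Q) L \<theta> h. g a = b}" unfolding Sg_def mem_Collect_eq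
        using e1 e2 e3 e4 e5 by metis
    qed
  qed
  have disj: "Sg Q L \<theta> h \<inter> Sg Q (L - {b}) \<theta> h = {}" using b by (auto simp: Sg_def)
  have f1: "finite (Sg Q L \<theta> h)" "finite (Sg Q (L - {b}) \<theta> h)"
    using fQ fL by (auto intro: Sg_finite)
  show ?thesis using bij_betw_same_card[OF bij] card_Un_disjoint[OF f1 disj] by simp
qed

lemma Sg_count:
  fixes h :: "'q \<Rightarrow> 'k" and \<theta> :: "'l \<Rightarrow> 'k"
  assumes Q: "finite Q" and K: "finite K" and hK: "h ` Q \<subseteq> K"
  shows "finite L \<Longrightarrow> \<theta> ` L \<subseteq> K \<Longrightarrow>
    card (Sg Q L \<theta> h) = (\<Prod>k\<in>K. sj (card {q\<in>Q. h q = k}) (card {x\<in>L. \<theta> x = k}))"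
  using Q hK
proof (induction Q arbitrary: L rule: finite_induct)
  case empty
  have "Sg {} L \<theta> h = (if L = {} then {\<lambda>x. undefined} else {})" by (auto simp: Sg_def)
  then have "card (Sg {} L \<theta> h) = (if L = {} then 1 else 0)" by simp
  also have "\<dots> = (\<Prod>k\<in>K. if {x\<in>L. \<theta> x = k} = {} then 1 else 0)"
    using empty K by (subst prod_if01) auto
  also have "\<dots> = (\<Prod>k\<in>K. sj (card {q\<in>{}. h q = k}) (card {x\<in>L. \<theta> x = k}))"
    using empty by (intro prod.cong) auto
  finally show ?case .
next
  case (insert a Q)
  let ?k = "h a"
  have ka: "?k \<in> K" using insert by auto
  let ?La = "{b\<in>L. \<theta> b = ?k}"
  let ?R = "\<Prod>k\<in>K - {?k}. sj (card {q\<in>Q. h q = k}) (card {x\<in>L. \<theta> x = k})"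
  have fS: "finite (Sg (insert a Q) L \<theta> h)" using insert by (simp add: Sg_finite)
  have "card (Sg (insert a Q) L \<theta> h) = (\<Sum>b\<in>?La. card {g\<in>Sg (insert a Q) L \<theta> h. g a = b})"
  proof -
    have "(\<Sum>b\<in>?La. \<Sum>g\<in>{g\<in>Sg (insert a Q) L \<theta> h. g a = b}. (1::nat)) = (\<Sum>g\<in>Sg (insert a Q) L \<theta> h. 1)"
      using fS insert by (intro sum.group) (auto simp: Sg_def)
    then show ?thesis by simp
  qed
  also have "\<dots> = (\<Sum>b\<in>?La. card (Sg Q L \<theta> h) + card (Sg Q (L - {b}) \<theta> h))"
    using insert by (intro sum.cong refl Sg_fiber) auto
  also have "\<dots> = (\<Sum>b\<in>?La. sj (card {q\<in>Q. h q = ?k}) (card ?La) * ?R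
                     + sj (card {q\<in>Q. h q = ?k}) (card ?La - 1) * ?R)"
  proof (rule sum.cong[OF refl])
    fix b assume b: "b \<in> ?La"
    have c1: "card (Sg Q L \<theta> h) = sj (card {q\<in>Q. h q = ?k}) (card ?La) * ?R"
      using insert K ka by (simp add: prod.remove)
    have fin: "finite (L - {b})" and sub: "\<theta> ` (L - {b}) \<subseteq> K" using insert.prems by auto
    have "card (Sg Q (L - {b}) \<theta> h) = (\<Prod>k\<in>K. sj (card {q\<in>Q. h q = k}) (card {x\<in>L - {b}. \<theta> x = k}))"
      by (rule insert.IH[OF fin sub]) (use insert.prems in auto)
    also have "\<dots> = sj (card {q\<in>Q. h q = ?k}) (card {x\<in>L - {b}. \<theta> x = ?k}) *
        (\<Prod>k\<in>K - {?k}. sj (card {q\<in>Q. h q = k}) (card {x\<in>L - {b}. \<theta> x = k}))"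
      using K ka by (simp add: prod.remove)
    also have "{x\<in>L - {b}. \<theta> x = ?k} = ?La - {b}" by auto
    also have "(\<Prod>k\<in>K - {?k}. sj (card {q\<in>Q. h q = k}) (card {x\<in>L - {b}. \<theta> x = k})) = ?R"
    proof (rule prod.cong[OF refl])
      fix k assume "k \<in> K - {?k}"
      then have "{x\<in>L - {b}. \<theta> x = k} = {x\<in>L. \<theta> x = k}" using b by auto
      then show "sj (card {q\<in>Q. h q = k}) (card {x\<in>L - {b}. \<theta> x = k}) = sj (card {q\<in>Q. h q = k}) (card {x\<in>L. \<theta> x = k})" by simp
    qed
    finally show "card (Sg Q L \<theta> h) + card (Sg Q (L - {b}) \<theta> h) = sj (card {q\<in>Q. h q = ?k}) (card ?La) * ?R
                     + sj (card {q\<in>Q. h q = ?k}) (card ?La - 1) * ?R"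
      using c1 b insert by (simp add: card_Diff_singleton)
  qed
  also have "\<dots> = sj (Suc (card {q\<in>Q. h q = ?k})) (card ?La) * ?R"
    by (simp add: algebra_simps)
  also have "\<dots> = sj (card {q\<in>insert a Q. h q = ?k}) (card {x\<in>L. \<theta> x = ?k}) *
        (\<Prod>k\<in>K - {?k}. sj (card {q\<in>insert a Q. h q = k}) (card {x\<in>L. \<theta> x = k}))"
  proof -
    have "{q\<in>insert a Q. h q = ?k} = insert a {q\<in>Q. h q = ?k}" by auto
    then have "card {q\<in>insert a Q. h q = ?k} = Suc (card {q\<in>Q. h q = ?k})" using insert by simp
    moreover have "(\<Prod>k\<in>K - {?k}. sj (card {q\<in>insert a Q. h q = k}) (card {x\<in>L. \<theta> x = k})) = ?R"
    proof (rule prod.cong[OF refl])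
      fix k assume "k \<in> K - {?k}"
      then have "{q\<in>insert a Q. h q = k} = {q\<in>Q. h q = k}" by auto
      then show "sj (card {q\<in>insert a Q. h q = k}) (card {x\<in>L. \<theta> x = k}) = sj (card {q\<in>Q. h q = k}) (card {x\<in>L. \<theta> x = k})" by simp
    qed
    ultimately show ?thesis by simp
  qed
  also have "\<dots> = (\<Prod>k\<in>K. sj (card {q\<in>insert a Q. h q = k}) (card {x\<in>L. \<theta> x = k}))"
    using K ka by (simp add: prod.remove)
  finally show ?case .
qed

lemma tele:
  "(\<Sum>m\<in>{1..M}. (-1::'a::comm_ring_1) ^ (m + 1) * (of_nat (sj p m) + of_nat (sj p (m - 1))))
     = (-1) ^ (M + 1) * of_nat (sj p M) + of_nat (sj p 0)"
proof (induction M)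
  case 0 then show ?case by simp
next
  case (Suc M)
  then show ?case by (simp add: algebra_simps)
qed

lemma fiber_sum:
  fixes dummy :: "'a::comm_ring_1"
  assumes Q: "\<And>n::nat. n \<ge> 1 \<Longrightarrow> of_nat n dvd (1::'a)" and M: "M > p"
  shows "(\<Sum>m\<le>M. ifc m * ((-1) ^ (m + 1) * of_nat (fact (m - 1)) * of_nat (sj (Suc p) m)))
    = (if p = 0 then 1 else (0::'a))"
proof -
  have t: "ifc m * ((-1) ^ (m + 1) * of_nat (fact (m - 1)) * of_nat (sj (Suc p) m))
      = (if m = 0 then 0 else (-1::'a) ^ (m + 1) * (of_nat (sj p m) + of_nat (sj p (m - 1))))" for m
  proof (cases m)
    case 0 then show ?thesis by simp
  next
    case (Suc m')
    have u: "of_nat (fact m) dvd (1::'a)" by (rule Q) (simp add: Suc_leI)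
    have "(of_nat (fact m) :: 'a) = of_nat (fact (m - 1)) * of_nat m" using Suc by (simp add: algebra_simps)
    then have X: "ifc m * (of_nat (fact (m - 1)) * of_nat m) = (1::'a)"
      unfolding ifc_def using rinv_unit'[OF u] by simp
    have "ifc m * ((-1) ^ (m + 1) * of_nat (fact (m - 1)) * of_nat (sj (Suc p) m))
      = (ifc m * (of_nat (fact (m - 1)) * of_nat m)) * ((-1::'a) ^ (m + 1) * (of_nat (sj p m) + of_nat (sj p (m - 1))))"
      by (simp only: sj.simps of_nat_mult of_nat_add) (simp only: mult_ac)
    then show ?thesis using X Suc by simp
  qed
  have "(\<Sum>m\<le>M. ifc m * ((-1) ^ (m + 1) * of_nat (fact (m - 1)) * of_nat (sj (Suc p) m)))
     = (\<Sum>m\<le>M. (if m = 0 then 0 else (-1::'a) ^ (m + 1) * (of_nat (sj p m) + of_nat (sj p (m - 1)))))"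
    by (rule sum.cong[OF refl], rule t)
  also have "\<dots> = (\<Sum>m\<in>{1..M}. (-1::'a) ^ (m + 1) * (of_nat (sj p m) + of_nat (sj p (m - 1))))"
    by (rule sum.mono_neutral_cong_right) auto
  also have "\<dots> = (-1) ^ (M + 1) * of_nat (sj p M) + of_nat (sj p 0)" by (rule tele)
  also have "\<dots> = (if p = 0 then 1 else 0)" using M by (cases p) (simp_all add: sj_vanish)
  finally show ?thesis .
qed

lemma prod_if01': "finite K \<Longrightarrow> (\<Prod>k\<in>K. if P k then 1 else 0 :: 'a::comm_semiring_1) = (if \<forall>k\<in>K. P k then 1 else 0)"
  by (induction K rule: finite_induct) auto

lemma sum_fibers_card:
  assumes "finite L" "\<theta> ` L \<subseteq> K" "finite K"
  shows "(\<Sum>k\<in>K. card {x\<in>L. \<theta> x = k}) = card L"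
proof -
  have "(\<Sum>k\<in>K. \<Sum>x\<in>{x\<in>L. \<theta> x = k}. (1::nat)) = (\<Sum>x\<in>L. 1)"
    using assms by (intro sum.group) auto
  then show ?thesis by simp
qed

lemma inj_fibers:
  assumes Q: "finite Q" and hK: "h ` Q = K"
  shows "inj_on h Q \<longleftrightarrow> (\<forall>k\<in>K. card {q\<in>Q. h q = k} = 1)"
proof
  assume inj: "inj_on h Q"
  show "\<forall>k\<in>K. card {q\<in>Q. h q = k} = 1"
  proof
    fix k assume "k \<in> K"
    then obtain q where q: "q \<in> Q" "h q = k" using hK by auto
    then have "{q\<in>Q. h q = k} = {q}" using inj by (auto simp: inj_on_def)
    then show "card {q\<in>Q. h q = k} = 1" by simp
  qed
next
  assume c: "\<forall>k\<in>K. card {q\<in>Q. h q = k} = 1"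
  show "inj_on h Q"
  proof (rule inj_onI)
    fix x y assume xy: "x \<in> Q" "y \<in> Q" "h x = h y"
    then have "card {q\<in>Q. h q = h x} = 1" using c hK by auto
    then obtain q0 where q0: "{q\<in>Q. h q = h x} = {q0}" by (rule card_1_singletonE)
    have "x \<in> {q\<in>Q. h q = h x}" "y \<in> {q\<in>Q. h q = h x}" using xy by auto
    then show "x = y" unfolding q0 by simp
  qed
qed

lemma CORE:
  fixes h :: "'q \<Rightarrow> 'k" and dummy :: "'a::comm_ring_1"
  assumes Qa: "\<And>n::nat. n \<ge> 1 \<Longrightarrow> of_nat n dvd (1::'a)"
    and Q: "finite Q" and K: "finite K" and hK: "h ` Q = K" and N: "N \<ge> card Q"
  shows "(\<Sum>n\<le>N. ipow (-1) (int n - int (card K)) * ifc n *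
           (\<Sum>\<theta>\<in>{1..n} \<rightarrow>\<^sub>E K. of_nat (card (Sg Q {1..n} \<theta> h)) *
              (\<Prod>k\<in>K. of_nat (fact (card {x\<in>{1..n}. \<theta> x = k} - 1)))))
         = (if inj_on h Q then 1 else (0::'a))"
proof -
  define M where "M = card Q"
  define p where "p k = card {q\<in>Q. h q = k}" for k
  define a :: "'k \<Rightarrow> nat \<Rightarrow> 'a" where
    "a k m = (-1) ^ (m + 1) * of_nat (fact (m - 1)) * of_nat (sj (p k) m)" for k m
  define F :: "nat \<Rightarrow> 'a" where "F n = ipow (-1) (int n - int (card K)) * ifc n *
           (\<Sum>\<theta>\<in>{1..n} \<rightarrow>\<^sub>E K. of_nat (card (Sg Q {1..n} \<theta> h)) *
              (\<Prod>k\<in>K. of_nat (fact (card {x\<in>{1..n}. \<theta> x = k} - 1))))" for n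
  define N' where "N' = max N (card K * M)"
  have pM: "p k \<le> M" for k unfolding p_def M_def using Q by (intro card_mono) auto
  have p1: "p k \<ge> 1" if kK: "k \<in> K" for k
  proof -
    obtain q where "q \<in> Q" "h q = k" using kK hK by blast
    then have "{q\<in>Q. h q = k} \<noteq> {}" by auto
    then show ?thesis unfolding p_def using Q by (simp add: Suc_leI card_gt_0_iff)
  qed
  have Fv: "F n = 0" if "n > M" for n
  proof -
    have "Sg Q {1..n} \<theta> h = {}" for \<theta>
    proof (rule ccontr)
      assume "Sg Q {1..n} \<theta> h \<noteq> {}"
      then obtain g where "g ` Q = {1..n}" by (auto simp: Sg_def)
      then have "n \<le> card Q" using card_image_le[OF Q, of g] by simp
      then show False using that M_def by simp
    qed
    then show ?thesis unfolding F_def by simp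
  qed
  have "(\<Sum>n\<le>N. F n) = (\<Sum>n\<le>M. F n)" using Fv N M_def by (intro sum_atMost_vanish) auto
  also have "\<dots> = (\<Sum>n\<le>N'. F n)" using Fv N'_def N M_def by (intro sum_atMost_vanish[symmetric]) auto
  also have "\<dots> = (\<Sum>n\<le>N'. ifc n * cK K a n)"
  proof (rule sum.cong[OF refl])
    fix n
    have "ipow (-1) (int n - int (card K)) * (of_nat (card (Sg Q {1..n} \<theta> h)) *
              (\<Prod>k\<in>K. of_nat (fact (card {x\<in>{1..n}. \<theta> x = k} - 1))))
          = (\<Prod>k\<in>K. a k (card {x\<in>{1..n}. \<theta> x = k}))" if th: "\<theta> \<in> {1..n} \<rightarrow>\<^sub>E K" for \<theta>
    proof -
      have thK: "\<theta> ` {1..n} \<subseteq> K" using th by auto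
      have c: "card (Sg Q {1..n} \<theta> h) = (\<Prod>k\<in>K. sj (p k) (card {x\<in>{1..n}. \<theta> x = k}))"
        unfolding p_def using Sg_count[OF Q K _ _ thK] hK by auto
      have s: "(\<Sum>k\<in>K. card {x\<in>{1..n}. \<theta> x = k} + 1) = n + card K"
        using sum_fibers_card[OF _ thK K] by (simp only: sum.distrib) simp
      have "ipow (-1::'a) (int n - int (card K)) = (-1) ^ (\<Sum>k\<in>K. card {x\<in>{1..n}. \<theta> x = k} + 1)"
        using s by (simp add: ipow_neg1)
      also have "\<dots> = (\<Prod>k\<in>K. (-1) ^ (card {x\<in>{1..n}. \<theta> x = k} + 1))" by (rule power_sum)
      finally have X: "ipow (-1::'a) (int n - int (card K)) = (\<Prod>k\<in>K. (-1) ^ (card {x\<in>{1..n}. \<theta> x = k} + 1))" .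
      have Y: "(\<Prod>k\<in>K. a k (card {x\<in>{1..n}. \<theta> x = k})) = (\<Prod>k\<in>K. (-1) ^ (card {x\<in>{1..n}. \<theta> x = k} + 1)) *
         (\<Prod>k\<in>K. of_nat (fact (card {x\<in>{1..n}. \<theta> x = k} - 1))) * (\<Prod>k\<in>K. of_nat (sj (p k) (card {x\<in>{1..n}. \<theta> x = k})))"
        unfolding a_def by (simp only: prod.distrib)
      show ?thesis unfolding Y X c of_nat_prod by (simp only: mult_ac)
    qed
    then have "ipow (-1) (int n - int (card K)) *
           (\<Sum>\<theta>\<in>{1..n} \<rightarrow>\<^sub>E K. of_nat (card (Sg Q {1..n} \<theta> h)) *
              (\<Prod>k\<in>K. of_nat (fact (card {x\<in>{1..n}. \<theta> x = k} - 1)))) = cK K a n"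
      unfolding cK_def SF_def by (simp add: sum_distrib_left)
    then show "F n = ifc n * cK K a n" unfolding F_def by (simp add: mult_ac)
  qed
  also have "\<dots> = (\<Prod>k\<in>K. \<Sum>m\<le>M. ifc m * a k m)"
  proof (rule EXP[OF Qa K])
    show "a k m = 0" if "k \<in> K" "m > M" for k m
      using that pM[of k] unfolding a_def by (simp add: sj_vanish)
    show "card K * M \<le> N'" unfolding N'_def by simp
  qed
  also have "\<dots> = (\<Prod>k\<in>K. if p k = 1 then 1 else 0)"
  proof (rule prod.cong[OF refl])
    fix k assume k: "k \<in> K"
    have e: "p k = Suc (p k - 1)" using p1[OF k] by simp
    have "(\<Sum>m\<le>M. ifc m * a k m) = (\<Sum>m\<le>M. ifc m * ((-1) ^ (m + 1) * of_nat (fact (m - 1)) * of_nat (sj (Suc (p k - 1)) m)))"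
      unfolding a_def using e by simp
    also have "\<dots> = (if p k - 1 = 0 then 1 else 0)"
    proof (rule fiber_sum[OF Qa])
      have "p k \<le> M" "1 \<le> p k" using pM[of k] p1[OF k] by auto
      then show "p k - 1 < M" by linarith
    qed
    finally show "(\<Sum>m\<le>M. ifc m * a k m) = (if p k = 1 then 1 else 0)" using p1[OF k] by simp
  qed
  also have "\<dots> = (if inj_on h Q then 1 else 0)"
    using inj_fibers[OF Q hK] K by (simp add: prod_if01' p_def)
  finally show ?thesis unfolding F_def .
qed

definition cp :: "'i set \<Rightarrow> 'j set \<Rightarrow> ('i \<times> 'j) set \<Rightarrow> ('i + 'j) \<Rightarrow> ('i + 'j) set" where
  "cp I J E v = {w \<in> I <+> J. (bip_adj E)\<^sup>*\<^sup>* v w}"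

lemma gc_cp: "graph_components I J E = cp I J E ` (I <+> J)"
  unfolding graph_components_def cp_def by simp

lemma adj_sym: "bip_adj E u v \<Longrightarrow> bip_adj E v u"
  unfolding bip_adj_def by blast

lemma rtr_sym: "(bip_adj E)\<^sup>*\<^sup>* u v \<Longrightarrow> (bip_adj E)\<^sup>*\<^sup>* v u"
proof (induction rule: rtranclp_induct)
  case base then show ?case by simp
next
  case (step y z)
  then show ?case using adj_sym by (metis converse_rtranclp_into_rtranclp)
qed

lemma cp_self: "v \<in> I <+> J \<Longrightarrow> v \<in> cp I J E v"
  unfolding cp_def by simp

lemma cp_sub: "cp I J E v \<subseteq> I <+> J"
  unfolding cp_def by auto

lemma cp_eq: assumes "w \<in> cp I J E v" shows "cp I J E w = cp I J E v"
proof -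
  have vw: "(bip_adj E)\<^sup>*\<^sup>* v w" using assms unfolding cp_def by simp
  then have wv: "(bip_adj E)\<^sup>*\<^sup>* w v" by (rule rtr_sym)
  show ?thesis unfolding cp_def using vw wv by (auto intro: rtranclp_trans)
qed

lemma cp_edge: assumes "(i, j) \<in> E" "i \<in> I" "j \<in> J"
  shows "cp I J E (Inl i) = cp I J E (Inr j)"
proof -
  have "bip_adj E (Inl i) (Inr j)" using assms unfolding bip_adj_def by blast
  then have "Inr j \<in> cp I J E (Inl i)" using assms unfolding cp_def by auto
  then show ?thesis by (simp add: cp_eq)
qed

lemma mono_rtr:
  assumes m: "\<forall>(i, j)\<in>E. f (Inl i) = f (Inr j)"
  shows "(bip_adj E)\<^sup>*\<^sup>* v w \<Longrightarrow> f w = f v"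
proof (induction rule: rtranclp_induct)
  case base then show ?case by simp
next
  case (step y z)
  from step(2) obtain i j where "(i, j) \<in> E" "(y = Inl i \<and> z = Inr j) \<or> (y = Inr j \<and> z = Inl i)"
    unfolding bip_adj_def by blast
  then have "f z = f y" using m by auto
  then show ?case using step by simp
qed

lemma mono_cp:
  assumes m: "\<forall>(i, j)\<in>E. f (Inl i) = f (Inr j)" and w: "w \<in> cp I J E v"
  shows "f w = f v"
  using mono_rtr[OF m] w unfolding cp_def by auto

definition rep :: "'v set \<Rightarrow> 'v" where "rep C = (SOME v. v \<in> C)"

lemma rep_in: assumes "C \<in> cp I J E ` (I <+> J)" shows "rep C \<in> C"
proof -
  obtain v where v: "v \<in> I <+> J" "C = cp I J E v" using assms by blast
  then have "v \<in> C" using cp_self by simp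
  then show ?thesis unfolding rep_def by (rule someI)
qed

lemma cp_rep: assumes "C \<in> cp I J E ` (I <+> J)" shows "cp I J E (rep C) = C"
proof -
  obtain v where v: "v \<in> I <+> J" "C = cp I J E v" using assms by blast
  have "rep C \<in> C" by (rule rep_in[OF assms])
  then show ?thesis using v cp_eq by simp
qed

lemma rep_V: "C \<in> cp I J E ` (I <+> J) \<Longrightarrow> rep C \<in> I <+> J"
  using rep_in cp_sub by blast

lemma case_sum_image: "(case_sum \<phi> \<psi>) ` (I <+> J) = \<phi> ` I \<union> \<psi> ` J"
  by force

lemma fimg_eq: "Inl ` {i\<in>I. \<eta> i = k} \<union> Inr ` {j\<in>J. \<zeta> j = k} = {v\<in>I <+> J. case_sum \<eta> \<zeta> v = k}"
  by force

lemma case_sum_PiE: "\<phi> \<in> I \<rightarrow>\<^sub>E L \<Longrightarrow> \<psi> \<in> J \<rightarrow>\<^sub>E L \<Longrightarrow> v \<in> I <+> J \<Longrightarrow> case_sum \<phi> \<psi> v \<in> L"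
  by auto

context
  fixes I :: "'i set" and J :: "'j set" and E :: "('i \<times> 'j) set" and K :: "'k set"
    and P :: "('i \<Rightarrow> 'k) \<Rightarrow> ('j \<Rightarrow> 'k) \<Rightarrow> bool"
  assumes EIJ: "E \<subseteq> I \<times> J"
    and Pcong: "\<And>\<eta> \<eta>' \<zeta> \<zeta>'. (\<forall>i\<in>I. \<eta> i = \<eta>' i) \<Longrightarrow> (\<forall>j\<in>J. \<zeta> j = \<zeta>' j) \<Longrightarrow> P \<eta> \<zeta> = P \<eta>' \<zeta>'"
begin

lemma mono_rep:
  assumes m: "\<forall>(i, j)\<in>E. f (Inl i) = f (Inr j)" and v: "v \<in> I <+> J"
  shows "f (rep (cp I J E v)) = f v"
proof -
  have "rep (cp I J E v) \<in> cp I J E v" using v by (intro rep_in) auto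
  then show ?thesis by (rule mono_cp[OF m])
qed

lemma cp_in: "v \<in> I <+> J \<Longrightarrow> cp I J E v \<in> cp I J E ` (I <+> J)" by blast

lemma BIJ1:
  fixes L :: "'l set" and G :: "('l \<Rightarrow> 'k) \<Rightarrow> 'a::comm_ring_1"
  shows "(\<Sum>(\<phi>, \<psi>, \<theta>)\<in>{(\<phi>, \<psi>, \<theta>). \<phi> \<in> I \<rightarrow>\<^sub>E L \<and> \<psi> \<in> J \<rightarrow>\<^sub>E L \<and> \<theta> \<in> L \<rightarrow>\<^sub>E K \<and> \<phi> ` I \<union> \<psi> ` J = L
          \<and> P (\<lambda>i. \<theta> (\<phi> i)) (\<lambda>j. \<theta> (\<psi> j)) \<and> (\<forall>(i, j)\<in>E. \<phi> i = \<psi> j)}. G \<theta>)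
     = (\<Sum>(h, \<theta>, g)\<in>Sigma {h\<in>cp I J E ` (I <+> J) \<rightarrow>\<^sub>E K. P (\<lambda>i. h (cp I J E (Inl i))) (\<lambda>j. h (cp I J E (Inr j)))}
           (\<lambda>h. Sigma (L \<rightarrow>\<^sub>E K) (\<lambda>\<theta>. Sg (cp I J E ` (I <+> J)) L \<theta> h)). G \<theta>)"
proof (rule sum.reindex_bij_witness[where
      j = "\<lambda>(\<phi>, \<psi>, \<theta>). (\<lambda>C\<in>cp I J E ` (I <+> J). \<theta> (case_sum \<phi> \<psi> (rep C)), \<theta>, \<lambda>C\<in>cp I J E ` (I <+> J). case_sum \<phi> \<psi> (rep C))"
      and i = "\<lambda>(h, \<theta>, g). (\<lambda>i\<in>I. g (cp I J E (Inl i)), \<lambda>j\<in>J. g (cp I J E (Inr j)), \<theta>)"])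
  let ?Q = "cp I J E ` (I <+> J)"
  fix s assume s: "s \<in> Sigma {h\<in>?Q \<rightarrow>\<^sub>E K. P (\<lambda>i. h (cp I J E (Inl i))) (\<lambda>j. h (cp I J E (Inr j)))}
           (\<lambda>h. Sigma (L \<rightarrow>\<^sub>E K) (\<lambda>\<theta>. Sg ?Q L \<theta> h))"
  obtain h \<theta> g where sh: "s = (h, \<theta>, g)" by (cases s) auto
  have h: "h \<in> ?Q \<rightarrow>\<^sub>E K" and Ph: "P (\<lambda>i. h (cp I J E (Inl i))) (\<lambda>j. h (cp I J E (Inr j)))"
    and th: "\<theta> \<in> L \<rightarrow>\<^sub>E K" and g: "g \<in> ?Q \<rightarrow>\<^sub>E L" "g ` ?Q = L" "\<forall>C\<in>?Q. \<theta> (g C) = h C"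
    using s sh by (auto simp: Sg_def)
  define \<phi> where "\<phi> = (\<lambda>i\<in>I. g (cp I J E (Inl i)))"
  define \<psi> where "\<psi> = (\<lambda>j\<in>J. g (cp I J E (Inr j)))"
  have fv: "case_sum \<phi> \<psi> v = g (cp I J E v)" if "v \<in> I <+> J" for v
    using that unfolding \<phi>_def \<psi>_def by auto
  have gr: "case_sum \<phi> \<psi> (rep C) = g C" if "C \<in> ?Q" for C
    using that fv[OF rep_V[OF that]] cp_rep[OF that] by simp
  show "(case (case s of (h, \<theta>, g) \<Rightarrow> (\<lambda>i\<in>I. g (cp I J E (Inl i)), \<lambda>j\<in>J. g (cp I J E (Inr j)), \<theta>)) of
         (\<phi>, \<psi>, \<theta>) \<Rightarrow> (\<lambda>C\<in>?Q. \<theta> (case_sum \<phi> \<psi> (rep C)), \<theta>, \<lambda>C\<in>?Q. case_sum \<phi> \<psi> (rep C))) = s"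
  proof -
    have "(\<lambda>C\<in>?Q. case_sum \<phi> \<psi> (rep C)) = g"
      using g(1) gr by (auto simp: fun_eq_iff PiE_def extensional_def)
    moreover have "(\<lambda>C\<in>?Q. \<theta> (case_sum \<phi> \<psi> (rep C))) = h"
      using h g(3) gr by (auto simp: fun_eq_iff PiE_def extensional_def)
    ultimately show ?thesis unfolding sh \<phi>_def \<psi>_def by simp
  qed
  show "(case s of (h, \<theta>, g) \<Rightarrow> (\<lambda>i\<in>I. g (cp I J E (Inl i)), \<lambda>j\<in>J. g (cp I J E (Inr j)), \<theta>))
     \<in> {(\<phi>, \<psi>, \<theta>). \<phi> \<in> I \<rightarrow>\<^sub>E L \<and> \<psi> \<in> J \<rightarrow>\<^sub>E L \<and> \<theta> \<in> L \<rightarrow>\<^sub>E K \<and> \<phi> ` I \<union> \<psi> ` J = L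
          \<and> P (\<lambda>i. \<theta> (\<phi> i)) (\<lambda>j. \<theta> (\<psi> j)) \<and> (\<forall>(i, j)\<in>E. \<phi> i = \<psi> j)}"
  proof -
    have p1: "\<phi> \<in> I \<rightarrow>\<^sub>E L" unfolding \<phi>_def using g(1) by (auto intro!: cp_in)
    have p2: "\<psi> \<in> J \<rightarrow>\<^sub>E L" unfolding \<psi>_def using g(1) by (auto intro!: cp_in)
    have "\<phi> ` I \<union> \<psi> ` J = (case_sum \<phi> \<psi>) ` (I <+> J)" by (rule case_sum_image[symmetric])
    also have "\<dots> = g ` ?Q" using fv by (auto simp: image_iff) 
    finally have p3: "\<phi> ` I \<union> \<psi> ` J = L" using g(2) by simp
    have p4: "P (\<lambda>i. \<theta> (\<phi> i)) (\<lambda>j. \<theta> (\<psi> j))"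
      using Ph Pcong[of "\<lambda>i. \<theta> (\<phi> i)" "\<lambda>i. h (cp I J E (Inl i))" "\<lambda>j. \<theta> (\<psi> j)" "\<lambda>j. h (cp I J E (Inr j))"]
        g(3) unfolding \<phi>_def \<psi>_def by (auto intro: cp_in)
    have p5: "\<forall>(i, j)\<in>E. \<phi> i = \<psi> j" unfolding \<phi>_def \<psi>_def using EIJ cp_edge by fastforce
    have eq: "(case s of (h, \<theta>, g) \<Rightarrow> (\<lambda>i\<in>I. g (cp I J E (Inl i)), \<lambda>j\<in>J. g (cp I J E (Inr j)), \<theta>)) = (\<phi>, \<psi>, \<theta>)"
      unfolding sh \<phi>_def \<psi>_def by simp
    show ?thesis unfolding eq using p1 p2 p3 p4 p5 th by simp
  qed
next
  let ?Q = "cp I J E ` (I <+> J)"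
  fix t assume t: "t \<in> {(\<phi>, \<psi>, \<theta>). \<phi> \<in> I \<rightarrow>\<^sub>E L \<and> \<psi> \<in> J \<rightarrow>\<^sub>E L \<and> \<theta> \<in> L \<rightarrow>\<^sub>E K \<and> \<phi> ` I \<union> \<psi> ` J = L
          \<and> P (\<lambda>i. \<theta> (\<phi> i)) (\<lambda>j. \<theta> (\<psi> j)) \<and> (\<forall>(i, j)\<in>E. \<phi> i = \<psi> j)}"
  obtain \<phi> \<psi> \<theta> where tt: "t = (\<phi>, \<psi>, \<theta>)" by (cases t) auto
  have p1: "\<phi> \<in> I \<rightarrow>\<^sub>E L" and p2: "\<psi> \<in> J \<rightarrow>\<^sub>E L" and th: "\<theta> \<in> L \<rightarrow>\<^sub>E K" and p3: "\<phi> ` I \<union> \<psi> ` J = L"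
    and p4: "P (\<lambda>i. \<theta> (\<phi> i)) (\<lambda>j. \<theta> (\<psi> j))" and p5: "\<forall>(i, j)\<in>E. \<phi> i = \<psi> j"
    using t tt by auto
  have m: "\<forall>(i, j)\<in>E. case_sum \<phi> \<psi> (Inl i) = case_sum \<phi> \<psi> (Inr j)" using p5 by auto
  define g where "g = (\<lambda>C\<in>?Q. case_sum \<phi> \<psi> (rep C))"
  define h where "h = (\<lambda>C\<in>?Q. \<theta> (case_sum \<phi> \<psi> (rep C)))"
  have gv: "g (cp I J E v) = case_sum \<phi> \<psi> v" if "v \<in> I <+> J" for v
    unfolding g_def using that mono_rep[OF m that] by (simp add: cp_in)
  have hv: "h (cp I J E v) = \<theta> (case_sum \<phi> \<psi> v)" if "v \<in> I <+> J" for v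
    unfolding h_def using that mono_rep[OF m that] by (simp add: cp_in)
  show "(case (case t of (\<phi>, \<psi>, \<theta>) \<Rightarrow> (\<lambda>C\<in>?Q. \<theta> (case_sum \<phi> \<psi> (rep C)), \<theta>, \<lambda>C\<in>?Q. case_sum \<phi> \<psi> (rep C))) of
          (h, \<theta>, g) \<Rightarrow> (\<lambda>i\<in>I. g (cp I J E (Inl i)), \<lambda>j\<in>J. g (cp I J E (Inr j)), \<theta>)) = t"
  proof -
    have "g (cp I J E (Inl i)) = \<phi> i" if "i \<in> I" for i using gv[OF InlI[OF that]] by simp
    then have "(\<lambda>i\<in>I. g (cp I J E (Inl i))) = \<phi>" using p1 by (auto simp: fun_eq_iff PiE_def extensional_def)
    moreover have "g (cp I J E (Inr j)) = \<psi> j" if "j \<in> J" for j using gv[OF InrI[OF that]] by simp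
    then have "(\<lambda>j\<in>J. g (cp I J E (Inr j))) = \<psi>" using p2 by (auto simp: fun_eq_iff PiE_def extensional_def)
    moreover have eq: "(case t of (\<phi>, \<psi>, \<theta>) \<Rightarrow> (\<lambda>C\<in>?Q. \<theta> (case_sum \<phi> \<psi> (rep C)), \<theta>, \<lambda>C\<in>?Q. case_sum \<phi> \<psi> (rep C))) = (h, \<theta>, g)"
      unfolding tt g_def h_def by simp
    ultimately show ?thesis unfolding eq tt by simp
  qed
  show "(case (case t of (\<phi>, \<psi>, \<theta>) \<Rightarrow> (\<lambda>C\<in>?Q. \<theta> (case_sum \<phi> \<psi> (rep C)), \<theta>, \<lambda>C\<in>?Q. case_sum \<phi> \<psi> (rep C))) of (h, \<theta>, g) \<Rightarrow> G \<theta>)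
     = (case t of (\<phi>, \<psi>, \<theta>) \<Rightarrow> G \<theta>)" unfolding tt by simp
  show "(case t of (\<phi>, \<psi>, \<theta>) \<Rightarrow> (\<lambda>C\<in>?Q. \<theta> (case_sum \<phi> \<psi> (rep C)), \<theta>, \<lambda>C\<in>?Q. case_sum \<phi> \<psi> (rep C)))
      \<in> Sigma {h\<in>?Q \<rightarrow>\<^sub>E K. P (\<lambda>i. h (cp I J E (Inl i))) (\<lambda>j. h (cp I J E (Inr j)))}
           (\<lambda>h. Sigma (L \<rightarrow>\<^sub>E K) (\<lambda>\<theta>. Sg ?Q L \<theta> h))"
  proof -
    have fL: "case_sum \<phi> \<psi> (rep C) \<in> L" if "C \<in> ?Q" for C
      using case_sum_PiE[OF p1 p2 rep_V[OF that]] .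
    have q1: "h \<in> ?Q \<rightarrow>\<^sub>E K" unfolding h_def using fL th by auto
    have "\<forall>i\<in>I. \<theta> (\<phi> i) = h (cp I J E (Inl i))" using hv[OF InlI] by simp
    moreover have "\<forall>j\<in>J. \<theta> (\<psi> j) = h (cp I J E (Inr j))" using hv[OF InrI] by simp
    ultimately have q2: "P (\<lambda>i. h (cp I J E (Inl i))) (\<lambda>j. h (cp I J E (Inr j)))"
      using p4 Pcong[of "\<lambda>i. \<theta> (\<phi> i)" "\<lambda>i. h (cp I J E (Inl i))" "\<lambda>j. \<theta> (\<psi> j)" "\<lambda>j. h (cp I J E (Inr j))"]
        by auto
    have q3: "g \<in> ?Q \<rightarrow>\<^sub>E L" unfolding g_def using fL by auto
    have "g ` ?Q = (\<lambda>v. g (cp I J E v)) ` (I <+> J)" by (simp add: image_image)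
    also have "\<dots> = (case_sum \<phi> \<psi>) ` (I <+> J)" by (rule image_cong[OF refl gv])
    finally have "g ` ?Q = (case_sum \<phi> \<psi>) ` (I <+> J)" .
    then have q4: "g ` ?Q = L" using p3 case_sum_image by metis
    have q5: "\<forall>C\<in>?Q. \<theta> (g C) = h C" unfolding g_def h_def by simp
    have eq: "(case t of (\<phi>, \<psi>, \<theta>) \<Rightarrow> (\<lambda>C\<in>?Q. \<theta> (case_sum \<phi> \<psi> (rep C)), \<theta>, \<lambda>C\<in>?Q. case_sum \<phi> \<psi> (rep C))) = (h, \<theta>, g)"
      unfolding tt g_def h_def by simp
    show ?thesis unfolding eq using q1 q2 q3 q4 q5 th by (simp add: Sg_def)
  qed
qed

end

context
  fixes I :: "'i set" and J :: "'j set" and E :: "('i \<times> 'j) set" and K :: "'k set"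
    and P :: "('i \<Rightarrow> 'k) \<Rightarrow> ('j \<Rightarrow> 'k) \<Rightarrow> bool"
  assumes Pcong: "\<And>\<eta> \<eta>' \<zeta> \<zeta>'. (\<forall>i\<in>I. \<eta> i = \<eta>' i) \<Longrightarrow> (\<forall>j\<in>J. \<zeta> j = \<zeta>' j) \<Longrightarrow> P \<eta> \<zeta> = P \<eta>' \<zeta>'"
    and Psurj: "\<And>\<eta> \<zeta> k. P \<eta> \<zeta> \<Longrightarrow> k \<in> K \<Longrightarrow> (\<exists>i\<in>I. \<eta> i = k) \<or> (\<exists>j\<in>J. \<zeta> j = k)"
begin

lemma BIJ2:
  "card {h\<in>cp I J E ` (I <+> J) \<rightarrow>\<^sub>E K. P (\<lambda>i. h (cp I J E (Inl i))) (\<lambda>j. h (cp I J E (Inr j))) \<and> inj_on h (cp I J E ` (I <+> J))}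
   = card {(\<eta>, \<zeta>). \<eta> \<in> I \<rightarrow>\<^sub>E K \<and> \<zeta> \<in> J \<rightarrow>\<^sub>E K \<and> P \<eta> \<zeta> \<and>
        cp I J E ` (I <+> J) = (\<lambda>k. Inl ` {i\<in>I. \<eta> i = k} \<union> Inr ` {j\<in>J. \<zeta> j = k}) ` K}"
    (is "card ?A = card ?B")
proof (rule bij_betw_same_card[of "\<lambda>h. (\<lambda>i\<in>I. h (cp I J E (Inl i)), \<lambda>j\<in>J. h (cp I J E (Inr j)))"],
       rule bij_betw_byWitness[where f' = "\<lambda>(\<eta>, \<zeta>). \<lambda>C\<in>cp I J E ` (I <+> J). case_sum \<eta> \<zeta> (rep C)"])
  let ?Q = "cp I J E ` (I <+> J)"
  let ?f = "\<lambda>h. (\<lambda>i\<in>I. h (cp I J E (Inl i)), \<lambda>j\<in>J. h (cp I J E (Inr j)))"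
  let ?f' = "\<lambda>(\<eta>, \<zeta>). \<lambda>C\<in>?Q. case_sum \<eta> \<zeta> (rep C)"
  have valf: "case_sum (\<lambda>i\<in>I. h (cp I J E (Inl i))) (\<lambda>j\<in>J. h (cp I J E (Inr j))) v = h (cp I J E v)"
    if "v \<in> I <+> J" for h v using that by auto
  show "\<forall>h\<in>?A. ?f' (?f h) = h"
  proof
    fix h assume h: "h \<in> ?A"
    have "case_sum (\<lambda>i\<in>I. h (cp I J E (Inl i))) (\<lambda>j\<in>J. h (cp I J E (Inr j))) (rep C) = h C" if "C \<in> ?Q" for C
      using valf[OF rep_V[OF that]] cp_rep[OF that] by simp
    then show "?f' (?f h) = h" using h by (auto simp: fun_eq_iff PiE_def extensional_def)
  qed
  have Bconst: "case_sum \<eta> \<zeta> (rep (cp I J E v)) = case_sum \<eta> \<zeta> v"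
    if B: "(\<eta>, \<zeta>) \<in> ?B" and v: "v \<in> I <+> J" for \<eta> \<zeta> v
  proof -
    have "cp I J E v \<in> ?Q" using v by blast
    then obtain k where "cp I J E v = Inl ` {i\<in>I. \<eta> i = k} \<union> Inr ` {j\<in>J. \<zeta> j = k}" using B by auto
    then have k: "cp I J E v = {w\<in>I <+> J. case_sum \<eta> \<zeta> w = k}" by (simp add: fimg_eq)
    have "v \<in> cp I J E v" using v by (rule cp_self)
    moreover have "rep (cp I J E v) \<in> cp I J E v" using v by (intro rep_in) blast
    ultimately show ?thesis using k by simp
  qed
  have Binj: "inj_on (\<lambda>C. case_sum \<eta> \<zeta> (rep C)) ?Q" if B: "(\<eta>, \<zeta>) \<in> ?B" for \<eta> \<zeta>
  proof (rule inj_onI)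
    fix C C' assume C: "C \<in> ?Q" "C' \<in> ?Q" and eq: "case_sum \<eta> \<zeta> (rep C) = case_sum \<eta> \<zeta> (rep C')"
    obtain k where k: "C = {w\<in>I <+> J. case_sum \<eta> \<zeta> w = k}" using B C(1) by (auto simp: fimg_eq)
    obtain k' where k': "C' = {w\<in>I <+> J. case_sum \<eta> \<zeta> w = k'}" using B C(2) by (auto simp: fimg_eq)
    have "case_sum \<eta> \<zeta> (rep C) = k" using rep_in[OF C(1)] k by auto
    moreover have "case_sum \<eta> \<zeta> (rep C') = k'" using rep_in[OF C(2)] k' by auto
    ultimately show "C = C'" using eq k k' by simp
  qed
  show "\<forall>p\<in>?B. ?f (?f' p) = p"
  proof
    fix p assume p: "p \<in> ?B"
    obtain \<eta> \<zeta> where pe: "p = (\<eta>, \<zeta>)" by (cases p)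
    have B: "(\<eta>, \<zeta>) \<in> ?B" using p pe by simp
    have e1: "(\<lambda>i\<in>I. (\<lambda>C\<in>?Q. case_sum \<eta> \<zeta> (rep C)) (cp I J E (Inl i))) = \<eta>"
    proof -
      have "(\<lambda>C\<in>?Q. case_sum \<eta> \<zeta> (rep C)) (cp I J E (Inl i)) = \<eta> i" if "i \<in> I" for i
        using Bconst[OF B InlI[OF that]] that by auto
      then show ?thesis using B by (auto simp: fun_eq_iff PiE_def extensional_def)
    qed
    have e2: "(\<lambda>j\<in>J. (\<lambda>C\<in>?Q. case_sum \<eta> \<zeta> (rep C)) (cp I J E (Inr j))) = \<zeta>"
    proof -
      have "(\<lambda>C\<in>?Q. case_sum \<eta> \<zeta> (rep C)) (cp I J E (Inr j)) = \<zeta> j" if "j \<in> J" for j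
        using Bconst[OF B InrI[OF that]] that by auto
      then show ?thesis using B by (auto simp: fun_eq_iff PiE_def extensional_def)
    qed
    show "?f (?f' p) = p" unfolding pe using e1 e2 by simp
  qed
  show "?f ` ?A \<subseteq> ?B"
  proof
    fix p assume "p \<in> ?f ` ?A"
    then obtain h where h: "h \<in> ?A" and pe: "p = ?f h" by blast
    have hK: "h \<in> ?Q \<rightarrow>\<^sub>E K" and Ph: "P (\<lambda>i. h (cp I J E (Inl i))) (\<lambda>j. h (cp I J E (Inr j)))"
      and inj: "inj_on h ?Q" using h by auto
    define \<eta> where "\<eta> = (\<lambda>i\<in>I. h (cp I J E (Inl i)))"
    define \<zeta> where "\<zeta> = (\<lambda>j\<in>J. h (cp I J E (Inr j)))"
    have val: "case_sum \<eta> \<zeta> v = h (cp I J E v)" if "v \<in> I <+> J" for v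
      unfolding \<eta>_def \<zeta>_def using valf[OF that] .
    have b1: "\<eta> \<in> I \<rightarrow>\<^sub>E K" unfolding \<eta>_def using hK by auto
    have b2: "\<zeta> \<in> J \<rightarrow>\<^sub>E K" unfolding \<zeta>_def using hK by auto
    have b3: "P \<eta> \<zeta>" using Ph Pcong[of \<eta> "\<lambda>i. h (cp I J E (Inl i))" \<zeta> "\<lambda>j. h (cp I J E (Inr j))"]
      unfolding \<eta>_def \<zeta>_def by simp
    have fib: "{w\<in>I <+> J. case_sum \<eta> \<zeta> w = h C} = C" if C: "C \<in> ?Q" for C
    proof
      show "{w\<in>I <+> J. case_sum \<eta> \<zeta> w = h C} \<subseteq> C"
      proof
        fix w assume w: "w \<in> {w\<in>I <+> J. case_sum \<eta> \<zeta> w = h C}"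
        then have wV: "w \<in> I <+> J" and "case_sum \<eta> \<zeta> w = h C" by auto
        then have "h (cp I J E w) = h C" using val[OF wV] by simp
        moreover have "cp I J E w \<in> ?Q" using wV by blast
        ultimately have "cp I J E w = C" using inj C by (auto dest: inj_onD)
        then show "w \<in> C" using cp_self w by blast
      qed
      show "C \<subseteq> {w\<in>I <+> J. case_sum \<eta> \<zeta> w = h C}"
      proof
        fix w assume w: "w \<in> C"
        obtain v where v: "v \<in> I <+> J" "C = cp I J E v" using C by blast
        have wV: "w \<in> I <+> J" using w v cp_sub by blast
        have "cp I J E w = C" using w v cp_eq by simp
        then show "w \<in> {w\<in>I <+> J. case_sum \<eta> \<zeta> w = h C}" using val[OF wV] wV by simp
      qed
    qed
    have b4: "?Q = (\<lambda>k. Inl ` {i\<in>I. \<eta> i = k} \<union> Inr ` {j\<in>J. \<zeta> j = k}) ` K"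
    proof
      show "?Q \<subseteq> (\<lambda>k. Inl ` {i\<in>I. \<eta> i = k} \<union> Inr ` {j\<in>J. \<zeta> j = k}) ` K"
      proof
        fix C assume C: "C \<in> ?Q"
        have "h C \<in> K" using hK C by auto
        moreover have "C = Inl ` {i\<in>I. \<eta> i = h C} \<union> Inr ` {j\<in>J. \<zeta> j = h C}"
          using fib[OF C] by (simp add: fimg_eq)
        ultimately show "C \<in> (\<lambda>k. Inl ` {i\<in>I. \<eta> i = k} \<union> Inr ` {j\<in>J. \<zeta> j = k}) ` K" by blast
      qed
      show "(\<lambda>k. Inl ` {i\<in>I. \<eta> i = k} \<union> Inr ` {j\<in>J. \<zeta> j = k}) ` K \<subseteq> ?Q"
      proof
        fix C assume "C \<in> (\<lambda>k. Inl ` {i\<in>I. \<eta> i = k} \<union> Inr ` {j\<in>J. \<zeta> j = k}) ` K"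
        then obtain k where k: "k \<in> K" "C = {w\<in>I <+> J. case_sum \<eta> \<zeta> w = k}" by (auto simp: fimg_eq)
        have "\<exists>v\<in>I <+> J. case_sum \<eta> \<zeta> v = k"
        proof (cases "\<exists>i\<in>I. \<eta> i = k")
          case True
          then obtain i where "i \<in> I" "\<eta> i = k" by blast
          then show ?thesis by (intro bexI[of _ "Inl i"]) auto
        next
          case False
          then obtain j where "j \<in> J" "\<zeta> j = k" using Psurj[OF b3 k(1)] by blast
          then show ?thesis by (intro bexI[of _ "Inr j"]) auto
        qed
        then obtain v where v: "v \<in> I <+> J" "case_sum \<eta> \<zeta> v = k" by blast
        have "h (cp I J E v) = k" using val[OF v(1)] v(2) by simp
        then have "C = cp I J E v" using fib[of "cp I J E v"] v(1) k(2) by blast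
        then show "C \<in> ?Q" using v(1) by blast
      qed
    qed
    have "p = (\<eta>, \<zeta>)" unfolding pe \<eta>_def \<zeta>_def by simp
    then show "p \<in> ?B" using b1 b2 b3 b4 by simp
  qed
  show "?f' ` ?B \<subseteq> ?A"
  proof
    fix h assume "h \<in> ?f' ` ?B"
    then obtain \<eta> \<zeta> where B: "(\<eta>, \<zeta>) \<in> ?B" and he: "h = (\<lambda>C\<in>?Q. case_sum \<eta> \<zeta> (rep C))" by auto
    have a1: "h \<in> ?Q \<rightarrow>\<^sub>E K"
    proof -
      have "case_sum \<eta> \<zeta> (rep C) \<in> K" if "C \<in> ?Q" for C
        using rep_V[OF that] B by auto
      then show ?thesis unfolding he by auto
    qed
    have hv: "h (cp I J E v) = case_sum \<eta> \<zeta> v" if "v \<in> I <+> J" for v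
      unfolding he using Bconst[OF B that] that by auto
    have a2: "P (\<lambda>i. h (cp I J E (Inl i))) (\<lambda>j. h (cp I J E (Inr j)))"
    proof -
      have "\<forall>i\<in>I. h (cp I J E (Inl i)) = \<eta> i" using hv[OF InlI] by simp
      moreover have "\<forall>j\<in>J. h (cp I J E (Inr j)) = \<zeta> j" using hv[OF InrI] by simp
      moreover have "P \<eta> \<zeta>" using B by simp
      ultimately show ?thesis using Pcong[of "\<lambda>i. h (cp I J E (Inl i))" \<eta> "\<lambda>j. h (cp I J E (Inr j))" \<zeta>] by simp
    qed
    have a3: "inj_on h ?Q"
      using Binj[OF B] unfolding he inj_on_def by simp
    show "h \<in> ?A" using a1 a2 a3 by simp
  qed
qed

end

lemma MAIN_E:
  fixes dummy :: "'a::comm_ring_1"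
    and C :: "'g::ab_group_add set"
    and I :: "'i set" and J :: "'j set" and K :: "'c set"
    and \<kappa> :: "'i \<Rightarrow> 'g" and lam :: "'j \<Rightarrow> 'g" and \<mu> :: "'c \<Rightarrow> 'g"
  assumes Qalg: "\<And>n::nat. n \<ge> 1 \<Longrightarrow> of_nat n dvd (1::'a)"
    and C_nonzero: "0 \<notin> C"
    and fin: "finite I" "finite J" "finite K"
    and mu: "\<mu> ` K \<subseteq> C"
    and EIJ: "E \<subseteq> I \<times> J"
    and N: "N \<ge> card I + card J"
  shows "(\<Sum>n\<le>N. ipow (-1) (int n - int (card K)) * rinv (of_nat (fact n)) *
        (\<Sum>(\<phi>, \<psi>, \<theta>) \<in> {(\<phi>, \<psi>, \<theta>). \<phi> \<in> I \<rightarrow>\<^sub>E {1..n} \<and> \<psi> \<in> J \<rightarrow>\<^sub>E {1..n} \<and> \<theta> \<in> {1..n} \<rightarrow>\<^sub>E K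
              \<and> \<phi> ` I \<union> \<psi> ` J = {1..n}
              \<and> (\<forall>k\<in>K. \<mu> k = (\<Sum>i \<in> {i\<in>I. \<theta> (\<phi> i) = k}. \<kappa> i) + (\<Sum>j \<in> {j\<in>J. \<theta> (\<psi> j) = k}. lam j))
              \<and> (\<forall>(i, j)\<in>E. \<phi> i = \<psi> j)}.
           (\<Prod>k\<in>K. of_nat (fact (card {l\<in>{1..n}. \<theta> l = k} - 1)))))
    = (of_nat (card {(\<eta>, \<zeta>). (\<eta> \<in> I \<rightarrow>\<^sub>E K \<and> \<zeta> \<in> J \<rightarrow>\<^sub>E K
              \<and> (\<forall>k\<in>K. \<mu> k = (\<Sum>i \<in> {i\<in>I. \<eta> i = k}. \<kappa> i) + (\<Sum>j \<in> {j\<in>J. \<zeta> j = k}. lam j)))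
              \<and> graph_components I J E = (\<lambda>k. Inl ` {i\<in>I. \<eta> i = k} \<union> Inr ` {j\<in>J. \<zeta> j = k}) ` K}) :: 'a)"
proof -
  define P where "P = (\<lambda>(\<eta>::'i \<Rightarrow> 'c) (\<zeta>::'j \<Rightarrow> 'c). \<forall>k\<in>K. \<mu> k = (\<Sum>i \<in> {i\<in>I. \<eta> i = k}. \<kappa> i) + (\<Sum>j \<in> {j\<in>J. \<zeta> j = k}. lam j))"
  have Pcong: "P \<eta> \<zeta> = P \<eta>' \<zeta>'" if "\<forall>i\<in>I. \<eta> i = \<eta>' i" "\<forall>j\<in>J. \<zeta> j = \<zeta>' j" for \<eta> \<eta>' \<zeta> \<zeta>'
  proof -
    have "{i\<in>I. \<eta> i = k} = {i\<in>I. \<eta>' i = k}" "{j\<in>J. \<zeta> j = k} = {j\<in>J. \<zeta>' j = k}" for k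
      using that by auto
    then show ?thesis unfolding P_def by simp
  qed
  have Psurj: "(\<exists>i\<in>I. \<eta> i = k) \<or> (\<exists>j\<in>J. \<zeta> j = k)" if "P \<eta> \<zeta>" "k \<in> K" for \<eta> \<zeta> k
  proof (rule ccontr)
    assume "\<not> ((\<exists>i\<in>I. \<eta> i = k) \<or> (\<exists>j\<in>J. \<zeta> j = k))"
    then have e1: "{i\<in>I. \<eta> i = k} = {}" and e2: "{j\<in>J. \<zeta> j = k} = {}" by auto
    have "\<mu> k = (\<Sum>i \<in> {i\<in>I. \<eta> i = k}. \<kappa> i) + (\<Sum>j \<in> {j\<in>J. \<zeta> j = k}. lam j)"
      using that unfolding P_def by auto
    then have "\<mu> k = 0" unfolding e1 e2 by simp
    then show False using mu C_nonzero that(2) by auto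
  qed
  let ?Q = "cp I J E ` (I <+> J)"
  define H where "H = {h\<in>?Q \<rightarrow>\<^sub>E K. P (\<lambda>i. h (cp I J E (Inl i))) (\<lambda>j. h (cp I J E (Inr j)))}"
  have finQ: "finite ?Q" using fin by simp
  have finH: "finite H" unfolding H_def
    by (rule finite_subset[OF _ finite_PiE[OF finQ, of "\<lambda>_. K"]]) (use fin in auto)
  have cardQ: "card ?Q \<le> N" using card_image_le[of "I <+> J" "cp I J E"] fin N by (simp add: card_Plus)
  define X where "X n h = (\<Sum>\<theta>\<in>{1..n} \<rightarrow>\<^sub>E K. of_nat (card (Sg ?Q {1..n} \<theta> h)) *
              (\<Prod>k\<in>K. of_nat (fact (card {x\<in>{1..n}. \<theta> x = k} - 1))) :: 'a)" for n :: nat and h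
  have step1: "(\<Sum>(\<phi>, \<psi>, \<theta>) \<in> {(\<phi>, \<psi>, \<theta>). \<phi> \<in> I \<rightarrow>\<^sub>E {1..n} \<and> \<psi> \<in> J \<rightarrow>\<^sub>E {1..n} \<and> \<theta> \<in> {1..n} \<rightarrow>\<^sub>E K
              \<and> \<phi> ` I \<union> \<psi> ` J = {1..n}
              \<and> (\<forall>k\<in>K. \<mu> k = (\<Sum>i \<in> {i\<in>I. \<theta> (\<phi> i) = k}. \<kappa> i) + (\<Sum>j \<in> {j\<in>J. \<theta> (\<psi> j) = k}. lam j))
              \<and> (\<forall>(i, j)\<in>E. \<phi> i = \<psi> j)}.
           (\<Prod>k\<in>K. of_nat (fact (card {l\<in>{1..n}. \<theta> l = k} - 1))) :: 'a) = (\<Sum>h\<in>H. X n h)" for n :: nat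
  proof -
    have "(\<Sum>(\<phi>, \<psi>, \<theta>) \<in> {(\<phi>, \<psi>, \<theta>). \<phi> \<in> I \<rightarrow>\<^sub>E {1..n} \<and> \<psi> \<in> J \<rightarrow>\<^sub>E {1..n} \<and> \<theta> \<in> {1..n} \<rightarrow>\<^sub>E K
              \<and> \<phi> ` I \<union> \<psi> ` J = {1..n}
              \<and> (\<forall>k\<in>K. \<mu> k = (\<Sum>i \<in> {i\<in>I. \<theta> (\<phi> i) = k}. \<kappa> i) + (\<Sum>j \<in> {j\<in>J. \<theta> (\<psi> j) = k}. lam j))
              \<and> (\<forall>(i, j)\<in>E. \<phi> i = \<psi> j)}.
           (\<Prod>k\<in>K. of_nat (fact (card {l\<in>{1..n}. \<theta> l = k} - 1))) :: 'a)
       = (\<Sum>(\<phi>, \<psi>, \<theta>) \<in> {(\<phi>, \<psi>, \<theta>). \<phi> \<in> I \<rightarrow>\<^sub>E {1..n} \<and> \<psi> \<in> J \<rightarrow>\<^sub>E {1..n} \<and> \<theta> \<in> {1..n} \<rightarrow>\<^sub>E K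
              \<and> \<phi> ` I \<union> \<psi> ` J = {1..n}
              \<and> P (\<lambda>i. \<theta> (\<phi> i)) (\<lambda>j. \<theta> (\<psi> j)) \<and> (\<forall>(i, j)\<in>E. \<phi> i = \<psi> j)}.
           (\<Prod>k\<in>K. of_nat (fact (card {l\<in>{1..n}. \<theta> l = k} - 1))) :: 'a)"
      unfolding P_def by simp
    also have "\<dots> = (\<Sum>(h, \<theta>, g)\<in>Sigma H (\<lambda>h. Sigma ({1..n} \<rightarrow>\<^sub>E K) (\<lambda>\<theta>. Sg ?Q {1..n} \<theta> h)).
           (\<Prod>k\<in>K. of_nat (fact (card {l\<in>{1..n}. \<theta> l = k} - 1))))"
      unfolding H_def by (rule BIJ1[OF EIJ Pcong]) auto
    also have "\<dots> = (\<Sum>h\<in>H. X n h)"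
    proof -
      have "(\<Sum>(h, \<theta>, g)\<in>Sigma H (\<lambda>h. Sigma ({1..n} \<rightarrow>\<^sub>E K) (\<lambda>\<theta>. Sg ?Q {1..n} \<theta> h)).
           (\<Prod>k\<in>K. of_nat (fact (card {l\<in>{1..n}. \<theta> l = k} - 1))) :: 'a)
         = (\<Sum>h\<in>H. \<Sum>(\<theta>, g)\<in>Sigma ({1..n} \<rightarrow>\<^sub>E K) (\<lambda>\<theta>. Sg ?Q {1..n} \<theta> h).
           (\<Prod>k\<in>K. of_nat (fact (card {l\<in>{1..n}. \<theta> l = k} - 1))))"
        using finH finQ fin by (subst sum.Sigma) (auto intro!: finite_SigmaI Sg_finite finite_PiE)
      also have "\<dots> = (\<Sum>h\<in>H. X n h)"
      proof (rule sum.cong[OF refl])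
        fix h
        show "(\<Sum>(\<theta>, g)\<in>Sigma ({1..n} \<rightarrow>\<^sub>E K) (\<lambda>\<theta>. Sg ?Q {1..n} \<theta> h).
           (\<Prod>k\<in>K. of_nat (fact (card {l\<in>{1..n}. \<theta> l = k} - 1))) :: 'a) = X n h"
          unfolding X_def using finQ fin
          by (subst sum.Sigma[symmetric]) (auto intro!: Sg_finite finite_PiE)
      qed
      finally show ?thesis .
    qed
    finally show ?thesis .
  qed
  have "(\<Sum>n\<le>N. ipow (-1) (int n - int (card K)) * rinv (of_nat (fact n)) *
        (\<Sum>(\<phi>, \<psi>, \<theta>) \<in> {(\<phi>, \<psi>, \<theta>). \<phi> \<in> I \<rightarrow>\<^sub>E {1..n} \<and> \<psi> \<in> J \<rightarrow>\<^sub>E {1..n} \<and> \<theta> \<in> {1..n} \<rightarrow>\<^sub>E K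
              \<and> \<phi> ` I \<union> \<psi> ` J = {1..n}
              \<and> (\<forall>k\<in>K. \<mu> k = (\<Sum>i \<in> {i\<in>I. \<theta> (\<phi> i) = k}. \<kappa> i) + (\<Sum>j \<in> {j\<in>J. \<theta> (\<psi> j) = k}. lam j))
              \<and> (\<forall>(i, j)\<in>E. \<phi> i = \<psi> j)}.
           (\<Prod>k\<in>K. of_nat (fact (card {l\<in>{1..n}. \<theta> l = k} - 1)))))
      = (\<Sum>n\<le>N. \<Sum>h\<in>H. ipow (-1) (int n - int (card K)) * ifc n * X n h)"
    unfolding step1 ifc_def by (simp add: sum_distrib_left)
  also have "\<dots> = (\<Sum>h\<in>H. \<Sum>n\<le>N. ipow (-1) (int n - int (card K)) * ifc n * X n h)"
    by (rule sum.swap)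
  also have "\<dots> = (\<Sum>h\<in>H. if inj_on h ?Q then 1 else 0)"
  proof (rule sum.cong[OF refl])
    fix h assume h: "h \<in> H"
    have hK: "h ` ?Q = K"
    proof
      show "h ` ?Q \<subseteq> K" using h unfolding H_def by auto
      show "K \<subseteq> h ` ?Q"
      proof
        fix k assume k: "k \<in> K"
        have "P (\<lambda>i. h (cp I J E (Inl i))) (\<lambda>j. h (cp I J E (Inr j)))" using h unfolding H_def by auto
        from Psurj[OF this k] show "k \<in> h ` ?Q" by auto
      qed
    qed
    show "(\<Sum>n\<le>N. ipow (-1) (int n - int (card K)) * ifc n * X n h) = (if inj_on h ?Q then 1 else 0)"
      unfolding X_def by (rule CORE[OF Qalg finQ fin(3) hK cardQ])
  qed
  also have "\<dots> = of_nat (card {h\<in>H. inj_on h ?Q})"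
  proof -
    have "H \<inter> {h. inj_on h ?Q} = {h\<in>H. inj_on h ?Q}" by auto
    then show ?thesis using finH by (simp add: sum.If_cases)
  qed
  also have "{h\<in>H. inj_on h ?Q} = {h\<in>?Q \<rightarrow>\<^sub>E K. P (\<lambda>i. h (cp I J E (Inl i))) (\<lambda>j. h (cp I J E (Inr j))) \<and> inj_on h ?Q}"
    unfolding H_def by auto
  also have "card \<dots> = card {(\<eta>, \<zeta>). \<eta> \<in> I \<rightarrow>\<^sub>E K \<and> \<zeta> \<in> J \<rightarrow>\<^sub>E K \<and> P \<eta> \<zeta> \<and>
        ?Q = (\<lambda>k. Inl ` {i\<in>I. \<eta> i = k} \<union> Inr ` {j\<in>J. \<zeta> j = k}) ` K}"
    by (rule BIJ2[OF Pcong Psurj]) auto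
  also have "{(\<eta>, \<zeta>). \<eta> \<in> I \<rightarrow>\<^sub>E K \<and> \<zeta> \<in> J \<rightarrow>\<^sub>E K \<and> P \<eta> \<zeta> \<and>
        ?Q = (\<lambda>k. Inl ` {i\<in>I. \<eta> i = k} \<union> Inr ` {j\<in>J. \<zeta> j = k}) ` K}
      = {(\<eta>, \<zeta>). (\<eta> \<in> I \<rightarrow>\<^sub>E K \<and> \<zeta> \<in> J \<rightarrow>\<^sub>E K
              \<and> (\<forall>k\<in>K. \<mu> k = (\<Sum>i \<in> {i\<in>I. \<eta> i = k}. \<kappa> i) + (\<Sum>j \<in> {j\<in>J. \<zeta> j = k}. lam j)))
              \<and> graph_components I J E = (\<lambda>k. Inl ` {i\<in>I. \<eta> i = k} \<union> Inr ` {j\<in>J. \<zeta> j = k}) ` K}"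
    unfolding P_def gc_cp by auto
  finally show ?thesis .
qed

theorem theorem6p9:
  fixes l :: "'a::comm_ring_1"
    and C :: "'g::ab_group_add set"
    and \<chi> :: "'g \<Rightarrow> 'g \<Rightarrow> int"
    and I :: "'i set" and J :: "'j set" and K :: "'c set"
    and \<kappa> :: "'i \<Rightarrow> 'g" and lam :: "'j \<Rightarrow> 'g" and \<mu> :: "'c \<Rightarrow> 'g"
  assumes Qalg: "\<And>n::nat. n \<ge> 1 \<Longrightarrow> of_nat n dvd (1::'a)"
    and l_unit: "l dvd 1"
    and lk_unit: "\<And>k::nat. k \<ge> 1 \<Longrightarrow> (l ^ k - 1) dvd 1"
    and C_nonzero: "0 \<notin> C"
    and C_add: "\<And>x y. x \<in> C \<Longrightarrow> y \<in> C \<Longrightarrow> x + y \<in> C"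
    and chi_add1: "\<And>a b c. \<chi> (a + b) c = \<chi> a c + \<chi> b c"
    and chi_add2: "\<And>a b c. \<chi> a (b + c) = \<chi> a b + \<chi> a c"
    and fin: "finite I" "finite J" "finite K"
    and kappa: "\<kappa> ` I \<subseteq> C" and lambda: "lam ` J \<subseteq> C" and mu: "\<mu> ` K \<subseteq> C"
  shows
   "ipow (l - 1) (int (card K) - int (card I) - int (card J)) * rinv (of_nat (aut_card K \<mu>)) *
      fsum (\<lambda>n. ipow (-1) (int n - int (card K)) * rinv (of_nat (fact n)) *
        (\<Sum>(\<phi>, \<psi>, \<theta>) \<in> {(\<phi>, \<psi>, \<theta>). \<phi> \<in> I \<rightarrow>\<^sub>E {1..n} \<and> \<psi> \<in> J \<rightarrow>\<^sub>E {1..n} \<and> \<theta> \<in> {1..n} \<rightarrow>\<^sub>E K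
              \<and> \<phi> ` I \<union> \<psi> ` J = {1..n}
              \<and> (\<forall>k\<in>K. \<mu> k = (\<Sum>i \<in> {i\<in>I. \<theta> (\<phi> i) = k}. \<kappa> i) + (\<Sum>j \<in> {j\<in>J. \<theta> (\<psi> j) = k}. lam j))}.
           (\<Prod>k\<in>K. of_nat (fact (card {l\<in>{1..n}. \<theta> l = k} - 1))) *
           (\<Prod>(i, j) \<in> {(i, j) \<in> I \<times> J. \<phi> i = \<psi> j}. ipow l (- \<chi> (lam j) (\<kappa> i)))))
    =
    rinv (of_nat (aut_card K \<mu>)) *
      (\<Sum>(\<eta>, \<zeta>) \<in> {(\<eta>, \<zeta>). \<eta> \<in> I \<rightarrow>\<^sub>E K \<and> \<zeta> \<in> J \<rightarrow>\<^sub>E K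
              \<and> (\<forall>k\<in>K. \<mu> k = (\<Sum>i \<in> {i\<in>I. \<eta> i = k}. \<kappa> i) + (\<Sum>j \<in> {j\<in>J. \<zeta> j = k}. lam j))}.
         (\<Sum>E \<in> {E. E \<subseteq> I \<times> J \<and>
                   graph_components I J E = (\<lambda>k. Inl ` {i\<in>I. \<eta> i = k} \<union> Inr ` {j\<in>J. \<zeta> j = k}) ` K}.
            ipow (l - 1) (betti1 I J E) *
            (\<Prod>(i, j) \<in> E. (ipow l (- \<chi> (lam j) (\<kappa> i)) - 1) * rinv (l - 1))))"
proof -
  let ?V = "I <+> J"
  define zf where "zf = (\<lambda>(i, j). ipow l (- \<chi> (lam j) (\<kappa> i)) - (1::'a))"
  define a where "a = l - 1"
  define A1 where "A1 = ipow a (int (card K) - int (card I) - int (card J))"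
  define N where "N = card I + card J"
  have a_unit: "a dvd 1" using lk_unit[of 1] unfolding a_def by simp
  define Tn where "Tn n = {(\<phi>, \<psi>, \<theta>). \<phi> \<in> I \<rightarrow>\<^sub>E {1..n} \<and> \<psi> \<in> J \<rightarrow>\<^sub>E {1..n} \<and> \<theta> \<in> {1..n} \<rightarrow>\<^sub>E K
              \<and> \<phi> ` I \<union> \<psi> ` J = {1..n}
              \<and> (\<forall>k\<in>K. \<mu> k = (\<Sum>i \<in> {i\<in>I. \<theta> (\<phi> i) = k}. \<kappa> i) + (\<Sum>j \<in> {j\<in>J. \<theta> (\<psi> j) = k}. lam j))}" for n :: nat
  define TE where "TE n E = {(\<phi>, \<psi>, \<theta>). \<phi> \<in> I \<rightarrow>\<^sub>E {1..n} \<and> \<psi> \<in> J \<rightarrow>\<^sub>E {1..n} \<and> \<theta> \<in> {1..n} \<rightarrow>\<^sub>E K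
              \<and> \<phi> ` I \<union> \<psi> ` J = {1..n}
              \<and> (\<forall>k\<in>K. \<mu> k = (\<Sum>i \<in> {i\<in>I. \<theta> (\<phi> i) = k}. \<kappa> i) + (\<Sum>j \<in> {j\<in>J. \<theta> (\<psi> j) = k}. lam j))
              \<and> (\<forall>(i, j)\<in>E. \<phi> i = \<psi> j)}" for n :: nat and E
  define P1 where "P1 n \<theta> = (\<Prod>k\<in>K. of_nat (fact (card {l\<in>{1..n}. \<theta> l = k} - 1)) :: 'a)" for n :: nat and \<theta>
  define VAL where "VAL = {(\<eta>, \<zeta>). \<eta> \<in> I \<rightarrow>\<^sub>E K \<and> \<zeta> \<in> J \<rightarrow>\<^sub>E K
              \<and> (\<forall>k\<in>K. \<mu> k = (\<Sum>i \<in> {i\<in>I. \<eta> i = k}. \<kappa> i) + (\<Sum>j \<in> {j\<in>J. \<zeta> j = k}. lam j))}"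
  define cnt where "cnt E = card {(\<eta>, \<zeta>). (\<eta> \<in> I \<rightarrow>\<^sub>E K \<and> \<zeta> \<in> J \<rightarrow>\<^sub>E K
              \<and> (\<forall>k\<in>K. \<mu> k = (\<Sum>i \<in> {i\<in>I. \<eta> i = k}. \<kappa> i) + (\<Sum>j \<in> {j\<in>J. \<zeta> j = k}. lam j)))
              \<and> graph_components I J E = (\<lambda>k. Inl ` {i\<in>I. \<eta> i = k} \<union> Inr ` {j\<in>J. \<zeta> j = k}) ` K}" for E
  define F where "F n = ipow (-1) (int n - int (card K)) * rinv (of_nat (fact n)) *
        (\<Sum>(\<phi>, \<psi>, \<theta>) \<in> Tn n.
           (\<Prod>k\<in>K. of_nat (fact (card {l\<in>{1..n}. \<theta> l = k} - 1))) *
           (\<Prod>(i, j) \<in> {(i, j) \<in> I \<times> J. \<phi> i = \<psi> j}. ipow l (- \<chi> (lam j) (\<kappa> i))))" for n :: nat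
  have finTn: "finite (Tn n)" for n
  proof -
    have "Tn n \<subseteq> (I \<rightarrow>\<^sub>E {1..n}) \<times> (J \<rightarrow>\<^sub>E {1..n}) \<times> ({1..n} \<rightarrow>\<^sub>E K)" unfolding Tn_def by auto
    moreover have "finite ((I \<rightarrow>\<^sub>E {1..n}) \<times> (J \<rightarrow>\<^sub>E {1..n}) \<times> ({1..n} \<rightarrow>\<^sub>E K))"
      using fin by (intro finite_cartesian_product finite_PiE) auto
    ultimately show ?thesis by (rule finite_subset)
  qed
  have Fv: "F n = 0" if "n > N" for n
  proof -
    have "Tn n = {}"
    proof (rule ccontr)
      assume "Tn n \<noteq> {}"
      then obtain \<phi> \<psi> where "\<phi> ` I \<union> \<psi> ` J = {1..n}" unfolding Tn_def by auto
      then have "n \<le> card (\<phi> ` I) + card (\<psi> ` J)" using card_Un_le[of "\<phi> ` I" "\<psi> ` J"] by simp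
      also have "\<dots> \<le> N" unfolding N_def using card_image_le[OF fin(1), of \<phi>] card_image_le[OF fin(2), of \<psi>] by (intro add_mono) auto
      finally show False using that by simp
    qed
    then show ?thesis unfolding F_def by simp
  qed
  have fsumF: "fsum F = (\<Sum>n\<le>N. F n)"
    unfolding fsum_def
  proof (rule sum.mono_neutral_left)
    show "{n. F n \<noteq> 0} \<subseteq> {..N}" using Fv by (auto simp: not_less[symmetric])
  qed auto
  have expand: "(\<Sum>(\<phi>, \<psi>, \<theta>) \<in> Tn n.
           (\<Prod>k\<in>K. of_nat (fact (card {l\<in>{1..n}. \<theta> l = k} - 1))) *
           (\<Prod>(i, j) \<in> {(i, j) \<in> I \<times> J. \<phi> i = \<psi> j}. ipow l (- \<chi> (lam j) (\<kappa> i))))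
       = (\<Sum>E\<in>Pow (I \<times> J). prod zf E * (\<Sum>(\<phi>, \<psi>, \<theta>) \<in> TE n E. P1 n \<theta>))" for n
  proof -
    define Ss where "Ss t = (case t of (\<phi>, \<psi>, \<theta>) \<Rightarrow> {(i, j) \<in> I \<times> J. \<phi> i = \<psi> j})" for t :: "('i \<Rightarrow> nat) \<times> ('j \<Rightarrow> nat) \<times> (nat \<Rightarrow> 'c)"
    define P1t where "P1t t = (case t of (\<phi>, \<psi>, \<theta>) \<Rightarrow> P1 n \<theta>)" for t :: "('i \<Rightarrow> nat) \<times> ('j \<Rightarrow> nat) \<times> (nat \<Rightarrow> 'c)"
    have "(\<Sum>(\<phi>, \<psi>, \<theta>) \<in> Tn n.
           (\<Prod>k\<in>K. of_nat (fact (card {l\<in>{1..n}. \<theta> l = k} - 1))) *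
           (\<Prod>(i, j) \<in> {(i, j) \<in> I \<times> J. \<phi> i = \<psi> j}. ipow l (- \<chi> (lam j) (\<kappa> i))))
        = (\<Sum>t\<in>Tn n. \<Sum>E\<in>{E. E \<in> Pow (I \<times> J) \<and> E \<subseteq> Ss t}. P1t t * prod zf E)"
    proof (rule sum.cong[OF refl])
      fix t assume "t \<in> Tn n"
      obtain \<phi> \<psi> \<theta> where tt: "t = (\<phi>, \<psi>, \<theta>)" by (cases t) auto
      have fS: "finite {(i, j) \<in> I \<times> J. \<phi> i = \<psi> j}" using fin by (auto intro: finite_subset[of _ "I \<times> J"])
      have "(\<Prod>(i, j) \<in> {(i, j) \<in> I \<times> J. \<phi> i = \<psi> j}. ipow l (- \<chi> (lam j) (\<kappa> i)))
          = (\<Prod>q \<in> {(i, j) \<in> I \<times> J. \<phi> i = \<psi> j}. zf q + 1)"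
        by (rule prod.cong) (auto simp: zf_def)
      also have "\<dots> = (\<Sum>E\<in>Pow {(i, j) \<in> I \<times> J. \<phi> i = \<psi> j}. prod zf E)"
        by (subst prod_add[OF fS]) simp
      also have "Pow {(i, j) \<in> I \<times> J. \<phi> i = \<psi> j} = {E. E \<in> Pow (I \<times> J) \<and> E \<subseteq> Ss t}"
        unfolding tt Ss_def by auto
      finally show "(case t of (\<phi>, \<psi>, \<theta>) \<Rightarrow> (\<Prod>k\<in>K. of_nat (fact (card {l\<in>{1..n}. \<theta> l = k} - 1))) *
           (\<Prod>(i, j) \<in> {(i, j) \<in> I \<times> J. \<phi> i = \<psi> j}. ipow l (- \<chi> (lam j) (\<kappa> i))))
          = (\<Sum>E\<in>{E. E \<in> Pow (I \<times> J) \<and> E \<subseteq> Ss t}. P1t t * prod zf E)"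
        unfolding tt P1t_def P1_def by (simp add: sum_distrib_left)
    qed
    also have "\<dots> = (\<Sum>E\<in>Pow (I \<times> J). \<Sum>t\<in>{t. t \<in> Tn n \<and> E \<subseteq> Ss t}. P1t t * prod zf E)"
      using finTn fin by (intro sum.swap_restrict) auto
    also have "\<dots> = (\<Sum>E\<in>Pow (I \<times> J). prod zf E * (\<Sum>(\<phi>, \<psi>, \<theta>) \<in> TE n E. P1 n \<theta>))"
    proof (rule sum.cong[OF refl])
      fix E assume E: "E \<in> Pow (I \<times> J)"
      have "{t. t \<in> Tn n \<and> E \<subseteq> Ss t} = TE n E"
        unfolding Tn_def TE_def Ss_def using E by auto
      then show "(\<Sum>t\<in>{t. t \<in> Tn n \<and> E \<subseteq> Ss t}. P1t t * prod zf E) = prod zf E * (\<Sum>(\<phi>, \<psi>, \<theta>) \<in> TE n E. P1 n \<theta>)"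
        unfolding P1t_def by (simp add: sum_distrib_left mult.commute split_beta)
    qed
    finally show ?thesis .
  qed
  have LHS: "A1 * (\<Sum>n\<le>N. F n) = (\<Sum>E\<in>Pow (I \<times> J). prod zf E * A1 * of_nat (cnt E))"
  proof -
    have "A1 * (\<Sum>n\<le>N. F n) = A1 * (\<Sum>n\<le>N. \<Sum>E\<in>Pow (I \<times> J). prod zf E *
        (ipow (-1) (int n - int (card K)) * rinv (of_nat (fact n)) * (\<Sum>(\<phi>, \<psi>, \<theta>) \<in> TE n E. P1 n \<theta>)))"
      unfolding F_def expand by (simp add: sum_distrib_left mult_ac)
    also have "\<dots> = (\<Sum>E\<in>Pow (I \<times> J). prod zf E * A1 * (\<Sum>n\<le>N.
        ipow (-1) (int n - int (card K)) * rinv (of_nat (fact n)) * (\<Sum>(\<phi>, \<psi>, \<theta>) \<in> TE n E. P1 n \<theta>)))"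
      by (subst sum.swap) (simp add: sum_distrib_left mult_ac)
    also have "\<dots> = (\<Sum>E\<in>Pow (I \<times> J). prod zf E * A1 * of_nat (cnt E))"
    proof (rule sum.cong[OF refl])
      fix E assume E: "E \<in> Pow (I \<times> J)"
      have "(\<Sum>n\<le>N. ipow (-1) (int n - int (card K)) * rinv (of_nat (fact n)) * (\<Sum>(\<phi>, \<psi>, \<theta>) \<in> TE n E. P1 n \<theta>))
          = (of_nat (cnt E) :: 'a)"
        unfolding TE_def P1_def cnt_def
        by (rule MAIN_E[OF Qalg C_nonzero fin mu]) (use E in \<open>auto simp: N_def\<close>)
      then show "prod zf E * A1 * (\<Sum>n\<le>N. ipow (-1) (int n - int (card K)) * rinv (of_nat (fact n)) * (\<Sum>(\<phi>, \<psi>, \<theta>) \<in> TE n E. P1 n \<theta>))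
          = prod zf E * A1 * of_nat (cnt E)" by simp
    qed
    finally show ?thesis .
  qed
  have RHS: "(\<Sum>(\<eta>, \<zeta>) \<in> VAL.
         (\<Sum>E \<in> {E. E \<subseteq> I \<times> J \<and>
                   graph_components I J E = (\<lambda>k. Inl ` {i\<in>I. \<eta> i = k} \<union> Inr ` {j\<in>J. \<zeta> j = k}) ` K}.
            ipow (l - 1) (betti1 I J E) *
            (\<Prod>(i, j) \<in> E. (ipow l (- \<chi> (lam j) (\<kappa> i)) - 1) * rinv (l - 1))))
      = (\<Sum>E\<in>Pow (I \<times> J). prod zf E * A1 * of_nat (cnt E))"
  proof -
    define GS where "GS p = {E. E \<subseteq> I \<times> J \<and>
                   graph_components I J E = (\<lambda>k. Inl ` {i\<in>I. fst p i = k} \<union> Inr ` {j\<in>J. snd p j = k}) ` K}"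
      for p :: "('i \<Rightarrow> 'c) \<times> ('j \<Rightarrow> 'c)"
    have finVAL: "finite VAL"
    proof -
      have "VAL \<subseteq> (I \<rightarrow>\<^sub>E K) \<times> (J \<rightarrow>\<^sub>E K)" unfolding VAL_def by auto
      moreover have "finite ((I \<rightarrow>\<^sub>E K) \<times> (J \<rightarrow>\<^sub>E K))" using fin by (intro finite_cartesian_product finite_PiE) auto
      ultimately show ?thesis by (rule finite_subset)
    qed
    have termeq: "ipow (l - 1) (betti1 I J E) *
            (\<Prod>(i, j) \<in> E. (ipow l (- \<chi> (lam j) (\<kappa> i)) - 1) * rinv (l - 1)) = prod zf E * A1"
      if p: "(\<eta>, \<zeta>) \<in> VAL" and E: "E \<in> GS (\<eta>, \<zeta>)" for \<eta> \<zeta> E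
    proof -
      have EIJ: "E \<subseteq> I \<times> J" and gc: "graph_components I J E = (\<lambda>k. {v \<in> I <+> J. case_sum \<eta> \<zeta> v = k}) ` K"
        using E unfolding GS_def by (auto simp: fimg_eq)
      have finE: "finite E" using EIJ fin by (auto intro: finite_subset)
      have inj: "inj_on (\<lambda>k. {v \<in> I <+> J. case_sum \<eta> \<zeta> v = k}) K"
      proof (rule inj_onI)
        fix k k' assume k: "k \<in> K" "k' \<in> K" and eq: "{v \<in> I <+> J. case_sum \<eta> \<zeta> v = k} = {v \<in> I <+> J. case_sum \<eta> \<zeta> v = k'}"
        have "\<exists>v\<in>I <+> J. case_sum \<eta> \<zeta> v = k"
        proof (rule ccontr)
          assume "\<not> (\<exists>v\<in>I <+> J. case_sum \<eta> \<zeta> v = k)"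
          then have e1: "{i\<in>I. \<eta> i = k} = {}" and e2: "{j\<in>J. \<zeta> j = k} = {}" by force+
          have "\<mu> k = (\<Sum>i \<in> {i\<in>I. \<eta> i = k}. \<kappa> i) + (\<Sum>j \<in> {j\<in>J. \<zeta> j = k}. lam j)"
            using p k unfolding VAL_def by auto
          then have "\<mu> k = 0" unfolding e1 e2 by simp
          then show False using mu C_nonzero k by auto
        qed
        then obtain v where "v \<in> I <+> J" "case_sum \<eta> \<zeta> v = k" by blast
        then have "v \<in> {v \<in> I <+> J. case_sum \<eta> \<zeta> v = k'}" using eq by blast
        then show "k = k'" using \<open>case_sum \<eta> \<zeta> v = k\<close> by simp
      qed
      have cardgc: "card (graph_components I J E) = card K" unfolding gc using card_image[OF inj] .
      have b: "betti1 I J E - int (card E) = int (card K) - int (card I) - int (card J)"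
        unfolding betti1_def cardgc by simp
      have "(\<Prod>(i, j) \<in> E. (ipow l (- \<chi> (lam j) (\<kappa> i)) - 1) * rinv (l - 1)) = (\<Prod>q\<in>E. zf q * rinv a)"
        by (rule prod.cong) (auto simp: zf_def a_def)
      also have "\<dots> = prod zf E * rinv a ^ card E" by (simp add: prod.distrib)
      finally have "ipow (l - 1) (betti1 I J E) * (\<Prod>(i, j) \<in> E. (ipow l (- \<chi> (lam j) (\<kappa> i)) - 1) * rinv (l - 1))
          = prod zf E * (ipow a (betti1 I J E) * rinv a ^ card E)" unfolding a_def by (simp add: mult_ac)
      also have "ipow a (betti1 I J E) * rinv a ^ card E = ipow a (betti1 I J E - int (card E))"
        by (rule ipow_minus_nat[OF a_unit, symmetric])
      also have "\<dots> = A1" unfolding A1_def b ..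
      finally show ?thesis .
    qed
    have "(\<Sum>(\<eta>, \<zeta>) \<in> VAL.
         (\<Sum>E \<in> {E. E \<subseteq> I \<times> J \<and>
                   graph_components I J E = (\<lambda>k. Inl ` {i\<in>I. \<eta> i = k} \<union> Inr ` {j\<in>J. \<zeta> j = k}) ` K}.
            ipow (l - 1) (betti1 I J E) *
            (\<Prod>(i, j) \<in> E. (ipow l (- \<chi> (lam j) (\<kappa> i)) - 1) * rinv (l - 1))))
        = (\<Sum>p\<in>VAL. \<Sum>E\<in>{E. E \<in> Pow (I \<times> J) \<and> E \<in> GS p}. prod zf E * A1)"
    proof (rule sum.cong[OF refl])
      fix p assume p: "p \<in> VAL"
      obtain \<eta> \<zeta> where pe: "p = (\<eta>, \<zeta>)" by (cases p)
      have gs: "{E. E \<in> Pow (I \<times> J) \<and> E \<in> GS p} = GS (\<eta>, \<zeta>)" unfolding GS_def pe by auto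
      show "(case p of (\<eta>, \<zeta>) \<Rightarrow> (\<Sum>E \<in> {E. E \<subseteq> I \<times> J \<and>
                   graph_components I J E = (\<lambda>k. Inl ` {i\<in>I. \<eta> i = k} \<union> Inr ` {j\<in>J. \<zeta> j = k}) ` K}.
            ipow (l - 1) (betti1 I J E) *
            (\<Prod>(i, j) \<in> E. (ipow l (- \<chi> (lam j) (\<kappa> i)) - 1) * rinv (l - 1))))
          = (\<Sum>E\<in>{E. E \<in> Pow (I \<times> J) \<and> E \<in> GS p}. prod zf E * A1)"
        unfolding gs unfolding pe using termeq p pe by (simp add: GS_def)
    qed
    also have "\<dots> = (\<Sum>E\<in>Pow (I \<times> J). \<Sum>p\<in>{p. p \<in> VAL \<and> E \<in> GS p}. prod zf E * A1)"
      using finVAL fin by (intro sum.swap_restrict) auto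
    also have "\<dots> = (\<Sum>E\<in>Pow (I \<times> J). prod zf E * A1 * of_nat (cnt E))"
    proof (rule sum.cong[OF refl])
      fix E assume E: "E \<in> Pow (I \<times> J)"
      have "{p. p \<in> VAL \<and> E \<in> GS p} = {(\<eta>, \<zeta>). (\<eta> \<in> I \<rightarrow>\<^sub>E K \<and> \<zeta> \<in> J \<rightarrow>\<^sub>E K
              \<and> (\<forall>k\<in>K. \<mu> k = (\<Sum>i \<in> {i\<in>I. \<eta> i = k}. \<kappa> i) + (\<Sum>j \<in> {j\<in>J. \<zeta> j = k}. lam j)))
              \<and> graph_components I J E = (\<lambda>k. Inl ` {i\<in>I. \<eta> i = k} \<union> Inr ` {j\<in>J. \<zeta> j = k}) ` K}"
        unfolding VAL_def GS_def using E by auto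
      then show "(\<Sum>p\<in>{p. p \<in> VAL \<and> E \<in> GS p}. prod zf E * A1) = prod zf E * A1 * of_nat (cnt E)"
        unfolding cnt_def by (simp add: mult.commute)
    qed
    finally show ?thesis .
  qed
  have main: "A1 * fsum F = (\<Sum>(\<eta>, \<zeta>) \<in> VAL.
         (\<Sum>E \<in> {E. E \<subseteq> I \<times> J \<and>
                   graph_components I J E = (\<lambda>k. Inl ` {i\<in>I. \<eta> i = k} \<union> Inr ` {j\<in>J. \<zeta> j = k}) ` K}.
            ipow (l - 1) (betti1 I J E) *
            (\<Prod>(i, j) \<in> E. (ipow l (- \<chi> (lam j) (\<kappa> i)) - 1) * rinv (l - 1))))"
    unfolding fsumF LHS RHS ..
  show ?thesis using main unfolding A1_def a_def F_def Tn_def VAL_def by (simp add: mult_ac)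
qed

end
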